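(* Consider a sequence (indexed by $n\to\infty$) of $(n,L_1,L_2,2^{nR_1},2^{nR_2})$ dual-source SPIR protocols satisfying the achievability conditions, i.e., witnessing that $(R_1,R_2)$ is achievable. Then $$H(F_{1,\mathcal{L}_1\setminus\{Z_1\}}\mid X_1^n\mathbf{A}Z_1Z_2)=o(n)\quad\text{and}\quad H(F_{2,\mathcal{L}_2\setminus\{Z_2\}}\mid X_2^n\mathbf{A}Z_1Z_2)=o(n),$$ where $o(n)$ denotes a quantity $g(n)$ with $g(n)/n\to0$.
   Context: All logarithms are base 2; $\oplus$ is bitwise addition modulo 2. The binary adder multiple-access channel (MAC) has inputs $X_1,X_2\in\{0,1\}$ and output $Y=X_1+X_2\in\{0,1,2\}$ (ordinary integer addition). For $i\in\{1,2\}$ let $\mathcal{L}_i=\{1,\dots,L_i\}$. An $(n,L_1,L_2,2^{nR_1},2^{nR_2})$ dual-source SPIR protocol involves a client and two servers, together with the following mutually independent random variables: files $F_{i,l}$ ($i\in\{1,2\}$, $l\in\mathcal{L}_i$), each uniform on $\{0,1\}^{nR_i}$, where the files $(F_{i,l})_{l\in\mathcal{L}_i}$ are stored at Server $i$ and $F_{i,\mathcal{S}}$ denotes $(F_{i,l})_{l\in\mathcal{S}}$; local randomness $U_0$ (client), $U_1$ (Server 1), $U_2$ (Server 2); and file selections $Z_1,Z_2$ uniform on $\mathcal{L}_1,\mathcal{L}_2$ (the client wants $F_{1,Z_1}$ and $F_{2,Z_2}$). The protocol operates as follows. For $t=1,\dots,n$, Server $i$ sends $(X_i)_t$, a function of $(F_{i,\mathcal{L}_i},U_i)$,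 over the MAC, and the client observes $Y_t=(X_1)_t+(X_2)_t$. Write $X_i^n=((X_i)_t)_{t=1}^n$ and $Y^n=(Y_t)_{t=1}^n$. Then, for rounds $j=1,\dots,r$, Server $i$ publicly sends $M_i(j)$, a function of $(F_{i,\mathcal{L}_i},U_i,(M_{0,i}(m))_{m<j})$, and the client publicly sends $M_{0,i}(j)$, a function of $(Z_i,U_0,Y^n,(M_i(m))_{m\le j})$, for $i\in\{1,2\}$. Set $\mathbf{A}_i=(M_{0,i}(j),M_i(j))_{j=1}^r$ and $\mathbf{A}=(\mathbf{A}_1,\mathbf{A}_2)$. Finally, the client forms an estimate $\hat F_{i,Z_i}$ of $F_{i,Z_i}$ as a function of $(Y^n,U_0,\mathbf{A}_i,Z_i)$. A rate pair $(R_1,R_2)$ is achievable if there exists a sequence (indexed by $n\to\infty$) of such protocols satisfying all of the following as $n\to\infty$ (the achievability conditions): - $\mathbb{P}[(\hat F_{1,Z_1},\hat F_{2,Z_2})\ne(F_{1,Z_1},F_{2,Z_2})]\to0$; - $I(F_{1,\mathcal{L}_1}X_1^nU_1\mathbf{A};Z_1Z_2)\to0$; - $I(F_{2,\mathcal{L}_2}X_2^nU_2\mathbf{A};Z_1Z_2)\to0$; - $I(F_{1,\mathcal{L}_1}X_1^nU_1\mathbf{A};F_{2,\mathcal{L}_2})\to0$; - $I(F_{2,\mathcal{L}_2}X_2^nU_2\mathbf{A};F_{1,\mathcal{L}_1})\to0$; - $I(Z_1Z_2Y^nU_0\mathbf{A};F_{1,\mathcal{L}_1\setminus\{Z_1\}}F_{2,\mathcal{L}_2\setminus\{Z_2\}})\to0$.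 *)

theory Defs
  imports "HOL-Probability.Probability"
begin

definition ent :: "'w pmf \<Rightarrow> ('w \<Rightarrow> 'a) \<Rightarrow> real" where
  "ent M X = (\<Sum>x \<in> X ` set_pmf M.
      - measure_pmf.prob M (X -` {x}) * log 2 (measure_pmf.prob M (X -` {x})))"

definition cond_ent :: "'w pmf \<Rightarrow> ('w \<Rightarrow> 'a) \<Rightarrow> ('w \<Rightarrow> 'b) \<Rightarrow> real" where
  "cond_ent M X Y = ent M (\<lambda>w. (X w, Y w)) - ent M Y"

definition mut_inf :: "'w pmf \<Rightarrow> ('w \<Rightarrow> 'a) \<Rightarrow> ('w \<Rightarrow> 'b) \<Rightarrow> real" where
  "mut_inf M X Y = ent M X + ent M Y - ent M (\<lambda>w. (X w, Y w))"

type_synonym files = "nat \<Rightarrow> bool list"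

text \<open>Realisation of all primitive random variables.\<close>
record spir_sample =
  sF1 :: files
  sF2 :: files
  sU0 :: nat
  sU1 :: nat
  sU2 :: nat
  sZ1 :: nat
  sZ2 :: nat

text \<open>A protocol of block length n (the block length is supplied separately).
  Local randomness is modelled as an arbitrary finitely supported distribution on nat;
  messages are natural numbers.
  enc_i files u t : channel input of server i at time t (t = 0..n-1).
  srv_i j files u prev : message M_i(j) from the files, U_i and (M_{0,i}(m))_{m<j}.
  cli_i j z u0 y prev : message M_{0,i}(j) from Z_i, U_0, Y^n and (M_i(m))_{m<=j}.
  dec_i y u0 A_i z : estimate of F_{i,Z_i}.\<close>
record spir_protocol =
  len1 :: nat
  len2 :: nat
  pU0 :: "nat pmf"
  pU1 :: "nat pmf"
  pU2 :: "nat pmf"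
  enc1 :: "files \<Rightarrow> nat \<Rightarrow> nat \<Rightarrow> bool"
  enc2 :: "files \<Rightarrow> nat \<Rightarrow> nat \<Rightarrow> bool"
  rounds :: nat
  srv1 :: "nat \<Rightarrow> files \<Rightarrow> nat \<Rightarrow> nat list \<Rightarrow> nat"
  srv2 :: "nat \<Rightarrow> files \<Rightarrow> nat \<Rightarrow> nat list \<Rightarrow> nat"
  cli1 :: "nat \<Rightarrow> nat \<Rightarrow> nat \<Rightarrow> nat list \<Rightarrow> nat list \<Rightarrow> nat"
  cli2 :: "nat \<Rightarrow> nat \<Rightarrow> nat \<Rightarrow> nat list \<Rightarrow> nat list \<Rightarrow> nat"
  dec1 :: "nat list \<Rightarrow> nat \<Rightarrow> (nat \<times> nat) list \<Rightarrow> nat \<Rightarrow> bool list"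
  dec2 :: "nat list \<Rightarrow> nat \<Rightarrow> (nat \<times> nat) list \<Rightarrow> nat \<Rightarrow> bool list"

definition valid_protocol :: "spir_protocol \<Rightarrow> bool" where
  "valid_protocol P \<longleftrightarrow> finite (set_pmf (pU0 P)) \<and> finite (set_pmf (pU1 P))
      \<and> finite (set_pmf (pU2 P))"

definition file_set :: "nat \<Rightarrow> nat \<Rightarrow> files set" where
  "file_set L k = PiE {1..L} (\<lambda>_. {xs. length xs = k})"

definition sample_pmf :: "nat \<Rightarrow> nat \<Rightarrow> spir_protocol \<Rightarrow> spir_sample pmf" where
  "sample_pmf L1 L2 P =
     bind_pmf (pmf_of_set (file_set L1 (len1 P))) (\<lambda>f1.
     bind_pmf (pmf_of_set (file_set L2 (len2 P))) (\<lambda>f2.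
     bind_pmf (pU0 P) (\<lambda>u0.
     bind_pmf (pU1 P) (\<lambda>u1.
     bind_pmf (pU2 P) (\<lambda>u2.
     bind_pmf (pmf_of_set {1..L1}) (\<lambda>z1.
     bind_pmf (pmf_of_set {1..L2}) (\<lambda>z2.
     return_pmf \<lparr>sF1 = f1, sF2 = f2, sU0 = u0, sU1 = u1, sU2 = u2, sZ1 = z1, sZ2 = z2\<rparr>)))))))"

definition Xn1 :: "nat \<Rightarrow> spir_protocol \<Rightarrow> spir_sample \<Rightarrow> bool list" where
  "Xn1 n P w = map (enc1 P (sF1 w) (sU1 w)) [0..<n]"

definition Xn2 :: "nat \<Rightarrow> spir_protocol \<Rightarrow> spir_sample \<Rightarrow> bool list" where
  "Xn2 n P w = map (enc2 P (sF2 w) (sU2 w)) [0..<n]"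

definition Yn :: "nat \<Rightarrow> spir_protocol \<Rightarrow> spir_sample \<Rightarrow> nat list" where
  "Yn n P w = map2 (\<lambda>a b. of_bool a + of_bool b) (Xn1 n P w) (Xn2 n P w)"

text \<open>Rounds j = 1..r: server message s = M_i(j) from the previous client messages,
  then client message c = M_{0,i}(j) from the server messages up to round j.
  The transcript is the list of pairs (M_{0,i}(j), M_i(j)).\<close>
definition run_rounds ::
  "nat \<Rightarrow> (nat \<Rightarrow> nat list \<Rightarrow> nat) \<Rightarrow> (nat \<Rightarrow> nat list \<Rightarrow> nat) \<Rightarrow> (nat \<times> nat) list" where
  "run_rounds r srv cli =
     foldl (\<lambda>ps j. let s = srv j (map fst ps); c = cli j (map snd ps @ [s]) in ps @ [(c, s)])
       [] [1..<Suc r]"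

definition A1 :: "nat \<Rightarrow> spir_protocol \<Rightarrow> spir_sample \<Rightarrow> (nat \<times> nat) list" where
  "A1 n P w = run_rounds (rounds P) (\<lambda>j. srv1 P j (sF1 w) (sU1 w))
                (\<lambda>j. cli1 P j (sZ1 w) (sU0 w) (Yn n P w))"

definition A2 :: "nat \<Rightarrow> spir_protocol \<Rightarrow> spir_sample \<Rightarrow> (nat \<times> nat) list" where
  "A2 n P w = run_rounds (rounds P) (\<lambda>j. srv2 P j (sF2 w) (sU2 w))
                (\<lambda>j. cli2 P j (sZ2 w) (sU0 w) (Yn n P w))"

definition Aall :: "nat \<Rightarrow> spir_protocol \<Rightarrow> spir_sample \<Rightarrow> (nat \<times> nat) list \<times> (nat \<times> nat) list" where
  "Aall n P w = (A1 n P w, A2 n P w)"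

definition other_files :: "nat \<Rightarrow> files \<Rightarrow> nat \<Rightarrow> bool list list" where
  "other_files L f z = map f (filter (\<lambda>l. l \<noteq> z) [1..<Suc L])"

definition all_files :: "nat \<Rightarrow> files \<Rightarrow> bool list list" where
  "all_files L f = map f [1..<Suc L]"

definition achieves :: "nat \<Rightarrow> nat \<Rightarrow> real \<Rightarrow> real \<Rightarrow> (nat \<Rightarrow> spir_protocol) \<Rightarrow> bool" where
  "achieves L1 L2 R1 R2 P \<longleftrightarrow>
     (\<forall>n. valid_protocol (P n)
          \<and> len1 (P n) = nat \<lfloor>real n * R1\<rfloor> \<and> len2 (P n) = nat \<lfloor>real n * R2\<rfloor>) \<and>
     (\<lambda>n. measure_pmf.prob (sample_pmf L1 L2 (P n))
        {w. (dec1 (P n) (Yn n (P n) w) (sU0 w) (A1 n (P n) w) (sZ1 w),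
             dec2 (P n) (Yn n (P n) w) (sU0 w) (A2 n (P n) w) (sZ2 w))
            \<noteq> (sF1 w (sZ1 w), sF2 w (sZ2 w))}) \<longlonglongrightarrow> 0 \<and>
     (\<lambda>n. mut_inf (sample_pmf L1 L2 (P n))
        (\<lambda>w. (all_files L1 (sF1 w), Xn1 n (P n) w, sU1 w, Aall n (P n) w))
        (\<lambda>w. (sZ1 w, sZ2 w))) \<longlonglongrightarrow> 0 \<and>
     (\<lambda>n. mut_inf (sample_pmf L1 L2 (P n))
        (\<lambda>w. (all_files L2 (sF2 w), Xn2 n (P n) w, sU2 w, Aall n (P n) w))
        (\<lambda>w. (sZ1 w, sZ2 w))) \<longlonglongrightarrow> 0 \<and>
     (\<lambda>n. mut_inf (sample_pmf L1 L2 (P n))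
        (\<lambda>w. (all_files L1 (sF1 w), Xn1 n (P n) w, sU1 w, Aall n (P n) w))
        (\<lambda>w. all_files L2 (sF2 w))) \<longlonglongrightarrow> 0 \<and>
     (\<lambda>n. mut_inf (sample_pmf L1 L2 (P n))
        (\<lambda>w. (all_files L2 (sF2 w), Xn2 n (P n) w, sU2 w, Aall n (P n) w))
        (\<lambda>w. all_files L1 (sF1 w))) \<longlonglongrightarrow> 0 \<and>
     (\<lambda>n. mut_inf (sample_pmf L1 L2 (P n))
        (\<lambda>w. (sZ1 w, sZ2 w, Yn n (P n) w, sU0 w, Aall n (P n) w))
        (\<lambda>w. (other_files L1 (sF1 w) (sZ1 w), other_files L2 (sF2 w) (sZ2 w)))) \<longlonglongrightarrow> 0"

end

theory Submission
  imports Defs "HOL-Probability.Probability" "HOL-Real_Asymp.Real_Asymp"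
begin

definition rN :: "'w pmf \<Rightarrow> 'w measure" where
  "rN M = restrict_space (measure_pmf M) (set_pmf M)"

lemma rN_info: "information_space (rN M) 2"
proof -
  have "prob_space (rN M)" unfolding rN_def
    by (rule prob_space_restrict_space) (auto simp: emeasure_Int_set_pmf[of M UNIV, simplified])
  then show ?thesis unfolding information_space_def information_space_axioms_def by simp
qed

lemma space_rN[simp]: "space (rN M) = set_pmf M"
  by (simp add: rN_def space_restrict_space)

lemma sets_rN[simp]: "sets (rN M) = Pow (set_pmf M)"
  by (auto simp: rN_def sets_restrict_space)

lemma measure_rN: "measure (rN M) (A \<inter> set_pmf M) = measure_pmf.prob M A"
  unfolding rN_def by (subst measure_restrict_space) (auto simp: measure_Int_set_pmf)

lemma sf_rN: "finite (set_pmf M) \<Longrightarrow> simple_function (rN M) X"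
  by (auto simp: simple_function_def)

lemma prob_sum_pmf: "finite (set_pmf M) \<Longrightarrow> measure_pmf.prob M A = (\<Sum>w\<in>A \<inter> set_pmf M. pmf M w)"
  by (metis measure_Int_set_pmf measure_measure_pmf_finite finite_Int)

lemma WX:
  assumes fin: "finite (set_pmf M)"
  shows "(\<Sum>x\<in>X ` set_pmf M. measure_pmf.prob M (X -` {x}) * \<phi> x) = (\<Sum>w\<in>set_pmf M. pmf M w * \<phi> (X w))"
proof -
  have "(\<Sum>w\<in>set_pmf M. pmf M w * \<phi> (X w)) = (\<Sum>x\<in>X ` set_pmf M. \<Sum>w\<in>{w\<in>set_pmf M. X w = x}. pmf M w * \<phi> (X w))"
    using fin by (rule sum.image_gen)
  also have "\<dots> = (\<Sum>x\<in>X ` set_pmf M. measure_pmf.prob M (X -` {x}) * \<phi> x)"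
  proof (rule sum.cong[OF refl])
    fix x assume "x \<in> X ` set_pmf M"
    have eqset: "{w\<in>set_pmf M. X w = x} = X -` {x} \<inter> set_pmf M" by auto
    have "(\<Sum>w\<in>{w\<in>set_pmf M. X w = x}. pmf M w * \<phi> (X w)) = (\<Sum>w\<in>X -` {x} \<inter> set_pmf M. pmf M w) * \<phi> x"
      unfolding eqset by (simp add: sum_distrib_right)
    then show "(\<Sum>w\<in>{w\<in>set_pmf M. X w = x}. pmf M w * \<phi> (X w)) = measure_pmf.prob M (X -` {x}) * \<phi> x"
      using prob_sum_pmf[OF fin, of "X -` {x}"] by simp
  qed
  finally show ?thesis by simp
qed

definition pX :: "'w pmf \<Rightarrow> ('w \<Rightarrow> 'a) \<Rightarrow> 'w \<Rightarrow> real" where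
  "pX M X w = measure_pmf.prob M (X -` {X w})"

lemma ent_w:
  assumes fin: "finite (set_pmf M)"
  shows "ent M X = - (\<Sum>w\<in>set_pmf M. pmf M w * log 2 (pX M X w))"
  unfolding ent_def pX_def
  using WX[OF fin, of X "\<lambda>x. log 2 (measure_pmf.prob M (X -` {x}))"]
  by (simp add: sum_negf)

lemma pX_pos: "w \<in> set_pmf M \<Longrightarrow> 0 < pX M X w"
proof -
  assume w: "w \<in> set_pmf M"
  have "pmf M w \<le> pX M X w" unfolding pX_def
    by (metis measure_pmf_single measure_pmf.finite_measure_mono sets_measure_pmf iso_tuple_UNIV_I
        vimage_singleton_eq insert_subset empty_subsetI mem_Collect_eq vimage_eq singletonI)
  moreover have "0 < pmf M w" using w by (simp add: pmf_positive)
  ultimately show ?thesis by simp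
qed

lemma pX_le1: "pX M X w \<le> 1" unfolding pX_def by simp

lemma ent_nonneg:
  assumes fin: "finite (set_pmf M)"
  shows "0 \<le> ent M X"
proof -
  have "(\<Sum>w\<in>set_pmf M. pmf M w * log 2 (pX M X w)) \<le> 0"
  proof (rule sum_nonpos)
    fix w assume w: "w \<in> set_pmf M"
    have "log 2 (pX M X w) \<le> 0" using pX_pos[OF w, of X] pX_le1[of M X w] by (simp add: log_le_zero_cancel_iff)
    then show "pmf M w * log 2 (pX M X w) \<le> 0" by (simp add: mult_nonneg_nonpos)
  qed
  then show ?thesis by (simp add: ent_w[OF fin])
qed

lemma ent_cong:
  assumes fin: "finite (set_pmf M)"
  and eq: "\<And>w w'. w \<in> set_pmf M \<Longrightarrow> w' \<in> set_pmf M \<Longrightarrow> X w = X w' \<longleftrightarrow> Y w = Y w'"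
  shows "ent M X = ent M Y"
proof -
  have "pX M X w = pX M Y w" if w: "w \<in> set_pmf M" for w
  proof -
    have "X -` {X w} \<inter> set_pmf M = Y -` {Y w} \<inter> set_pmf M" proof (rule set_eqI)
      fix x show "x \<in> X -` {X w} \<inter> set_pmf M \<longleftrightarrow> x \<in> Y -` {Y w} \<inter> set_pmf M"
        using eq[OF w, of x] by (auto simp: eq_commute)
    qed
    then show ?thesis unfolding pX_def by (metis measure_Int_set_pmf)
  qed
  then show ?thesis by (simp add: ent_w[OF fin])
qed

lemma sd_rN:
  assumes fin: "finite (set_pmf M)"
  shows "simple_distributed (rN M) X (\<lambda>x. measure_pmf.prob M (X -` {x}))"
proof -
  interpret I: information_space "rN M" 2 by (rule rN_info)
  show ?thesis
    by (rule I.simple_distributedI[OF sf_rN[OF fin]]) (auto simp: measure_rN)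
qed

lemma ssa:
  assumes fin: "finite (set_pmf M)"
  shows "ent M (\<lambda>w. (X w, Y w, Z w)) + ent M Z \<le> ent M (\<lambda>w. (X w, Z w)) + ent M (\<lambda>w. (Y w, Z w))"
proof -
  interpret I: information_space "rN M" 2 by (rule rN_info)
  let ?P = "\<lambda>T t. measure_pmf.prob M (T -` {t})"
  let ?T = "\<lambda>w. (X w, Y w, Z w)"
  have "0 \<le> (\<Sum>(x, y, z)\<in>?T ` space (rN M). ?P ?T (x, y, z) * log 2 (?P ?T (x, y, z) /
      (?P (\<lambda>w. (X w, Z w)) (x, z) * (?P (\<lambda>w. (Y w, Z w)) (y, z) / ?P Z z))))"
    using I.conditional_mutual_information_nonneg[OF sf_rN[OF fin] sf_rN[OF fin] sf_rN[OF fin], of X Y Z]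
    by (subst (asm) I.conditional_mutual_information_eq[OF sd_rN[OF fin] sd_rN[OF fin] sd_rN[OF fin] sd_rN[OF fin]])
  also have "\<dots> = (\<Sum>t\<in>?T ` set_pmf M. ?P ?T t * log 2 (?P ?T t /
      (?P (\<lambda>w. (X w, Z w)) (fst t, snd (snd t)) * (?P (\<lambda>w. (Y w, Z w)) (snd t) / ?P Z (snd (snd t))))))"
    by (auto simp: split_beta intro!: sum.cong)
  also have "\<dots> = (\<Sum>w\<in>set_pmf M. pmf M w * log 2 (pX M ?T w /
      (pX M (\<lambda>w. (X w, Z w)) w * (pX M (\<lambda>w. (Y w, Z w)) w / pX M Z w))))"
    by (subst WX[OF fin]) (simp add: pX_def)
  also have "\<dots> = (\<Sum>w\<in>set_pmf M. pmf M w * log 2 (pX M ?T w) - pmf M w * log 2 (pX M (\<lambda>w. (X w, Z w)) w)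
      - pmf M w * log 2 (pX M (\<lambda>w. (Y w, Z w)) w) + pmf M w * log 2 (pX M Z w))"
  proof (rule sum.cong[OF refl])
    fix w assume w: "w \<in> set_pmf M"
    note p = pX_pos[OF w]
    have "log 2 (pX M ?T w / (pX M (\<lambda>w. (X w, Z w)) w * (pX M (\<lambda>w. (Y w, Z w)) w / pX M Z w)))
      = log 2 (pX M ?T w) - log 2 (pX M (\<lambda>w. (X w, Z w)) w) - log 2 (pX M (\<lambda>w. (Y w, Z w)) w) + log 2 (pX M Z w)"
      using p[of ?T] p[of "\<lambda>w. (X w, Z w)"] p[of "\<lambda>w. (Y w, Z w)"] p[of Z]
      by (simp add: log_divide log_mult)
    note h = this
    show "pmf M w * log 2 (pX M ?T w / (pX M (\<lambda>w. (X w, Z w)) w * (pX M (\<lambda>w. (Y w, Z w)) w / pX M Z w))) =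
      pmf M w * log 2 (pX M ?T w) - pmf M w * log 2 (pX M (\<lambda>w. (X w, Z w)) w)
      - pmf M w * log 2 (pX M (\<lambda>w. (Y w, Z w)) w) + pmf M w * log 2 (pX M Z w)"
      unfolding h by (simp add: algebra_simps)
  qed
  also have "\<dots> = - ent M ?T + ent M (\<lambda>w. (X w, Z w)) + ent M (\<lambda>w. (Y w, Z w)) - ent M Z"
    by (simp add: ent_w[OF fin] sum.distrib sum_subtractf)
  finally show ?thesis by simp
qed

lemma ent_const: "finite (set_pmf M) \<Longrightarrow> ent M (\<lambda>w. c) = 0"
  by (simp add: ent_w pX_def)

lemma subadd:
  assumes fin: "finite (set_pmf M)"
  shows "ent M (\<lambda>w. (X w, Y w)) \<le> ent M X + ent M Y"
proof -
  have "ent M (\<lambda>w. (X w, Y w, ())) + ent M (\<lambda>w. ()) \<le> ent M (\<lambda>w. (X w, ())) + ent M (\<lambda>w. (Y w, ()))"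
    by (rule ssa[OF fin])
  moreover have "ent M (\<lambda>w. (X w, Y w, ())) = ent M (\<lambda>w. (X w, Y w))" by (rule ent_cong[OF fin]) auto
  moreover have "ent M (\<lambda>w. (X w, ())) = ent M X" by (rule ent_cong[OF fin]) auto
  moreover have "ent M (\<lambda>w. (Y w, ())) = ent M Y" by (rule ent_cong[OF fin]) auto
  ultimately show ?thesis using ent_const[OF fin, of "()"] by simp
qed

lemma data_proc:
  assumes fin: "finite (set_pmf M)"
  shows "ent M (\<lambda>w. f (X w)) \<le> ent M X"
proof -
  have "ent M (\<lambda>w. (X w, X w, f (X w))) + ent M (\<lambda>w. f (X w)) \<le> ent M (\<lambda>w. (X w, f (X w))) + ent M (\<lambda>w. (X w, f (X w)))"
    by (rule ssa[OF fin])
  moreover have "ent M (\<lambda>w. (X w, X w, f (X w))) = ent M X" by (rule ent_cong[OF fin]) auto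
  moreover have "ent M (\<lambda>w. (X w, f (X w))) = ent M X" by (rule ent_cong[OF fin]) auto
  ultimately show ?thesis by simp
qed

lemma data_proc':
  assumes fin: "finite (set_pmf M)" and eq: "\<And>w. w \<in> set_pmf M \<Longrightarrow> Y w = f (X w)"
  shows "ent M Y \<le> ent M X"
proof -
  have "ent M Y = ent M (\<lambda>w. f (X w))" by (rule ent_cong[OF fin]) (auto simp: eq)
  then show ?thesis using data_proc[OF fin, of f X] by simp
qed

lemma cond_ent_nonneg:
  assumes fin: "finite (set_pmf M)"
  shows "0 \<le> cond_ent M X Y"
  using data_proc[OF fin, of snd "\<lambda>w. (X w, Y w)"] by (simp add: cond_ent_def)

lemma cond_ent_fun:
  assumes fin: "finite (set_pmf M)" and eq: "\<And>w. X w = \<phi> (Y w) (K w)"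
  shows "cond_ent M X Y \<le> ent M K"
proof -
  have "ent M (\<lambda>w. (X w, Y w)) \<le> ent M (\<lambda>w. (K w, Y w))"
    by (rule data_proc'[OF fin, where f="\<lambda>(k, y). (\<phi> y k, y)"]) (simp add: eq)
  then show ?thesis using subadd[OF fin, of K Y] by (simp add: cond_ent_def)
qed

lemma ent_list:
  assumes fin: "finite (set_pmf M)"
  shows "ent M (\<lambda>w. map (\<lambda>l. h l w) xs) \<le> (\<Sum>l\<leftarrow>xs. ent M (h l))"
proof (induction xs)
  case Nil
  then show ?case by (simp add: ent_const[OF fin])
next
  case (Cons x xs)
  have "ent M (\<lambda>w. map (\<lambda>l. h l w) (x # xs)) = ent M (\<lambda>w. (h x w, map (\<lambda>l. h l w) xs))"
    by (rule ent_cong[OF fin]) auto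
  also have "\<dots> \<le> ent M (h x) + ent M (\<lambda>w. map (\<lambda>l. h l w) xs)" by (rule subadd[OF fin])
  finally show ?case using Cons by simp
qed

lemma mut_inf_mono1:
  assumes fin: "finite (set_pmf M)"
  shows "mut_inf M (\<lambda>w. f (X w)) Y \<le> mut_inf M X Y"
proof -
  have "ent M (\<lambda>w. (X w, Y w, f (X w))) + ent M (\<lambda>w. f (X w)) \<le> ent M (\<lambda>w. (X w, f (X w))) + ent M (\<lambda>w. (Y w, f (X w)))"
    by (rule ssa[OF fin])
  moreover have "ent M (\<lambda>w. (X w, Y w, f (X w))) = ent M (\<lambda>w. (X w, Y w))" by (rule ent_cong[OF fin]) auto
  moreover have "ent M (\<lambda>w. (X w, f (X w))) = ent M X" by (rule ent_cong[OF fin]) auto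
  moreover have "ent M (\<lambda>w. (Y w, f (X w))) = ent M (\<lambda>w. (f (X w), Y w))" by (rule ent_cong[OF fin]) auto
  ultimately show ?thesis by (simp add: mut_inf_def)
qed

lemma mut_inf_sym:
  assumes fin: "finite (set_pmf M)"
  shows "mut_inf M X Y = mut_inf M Y X"
proof -
  have "ent M (\<lambda>w. (X w, Y w)) = ent M (\<lambda>w. (Y w, X w))" by (rule ent_cong[OF fin]) auto
  then show ?thesis by (simp add: mut_inf_def)
qed

lemma mut_inf_mono:
  assumes fin: "finite (set_pmf M)"
  shows "mut_inf M (\<lambda>w. f (X w)) (\<lambda>w. g (Y w)) \<le> mut_inf M X Y"
proof -
  have "mut_inf M (\<lambda>w. f (X w)) (\<lambda>w. g (Y w)) = mut_inf M (\<lambda>w. g (Y w)) (\<lambda>w. f (X w))" by (rule mut_inf_sym[OF fin])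
  also have "\<dots> \<le> mut_inf M Y (\<lambda>w. f (X w))" by (rule mut_inf_mono1[OF fin])
  also have "\<dots> = mut_inf M (\<lambda>w. f (X w)) Y" by (rule mut_inf_sym[OF fin])
  also have "\<dots> \<le> mut_inf M X Y" by (rule mut_inf_mono1[OF fin])
  finally show ?thesis .
qed


lemma KLterm:
  fixes a b :: real
  assumes "0 \<le> a" "0 \<le> b" "0 < a \<Longrightarrow> 0 < b"
  shows "(a - b) / ln 2 \<le> a * (log 2 a - log 2 b)"
proof (cases "a = 0")
  case True then show ?thesis using assms by (simp add: divide_nonpos_pos)
next
  case False
  then have a: "0 < a" using assms by simp
  then have b: "0 < b" using assms by simp
  have "ln (b / a) \<le> b / a - 1" using a b by (intro ln_le_minus_one) simp
  then have "a * ln (b / a) \<le> b - a" using a by (simp add: field_simps)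
  then have "a * (ln a - ln b) \<ge> a - b" using a b by (simp add: ln_div algebra_simps)
  moreover have "a * (log 2 a - log 2 b) = a * (ln a - ln b) / ln 2" by (simp add: log_def diff_divide_distrib[symmetric])
  ultimately show ?thesis using divide_right_mono[of "a - b" "a * (ln a - ln b)" "ln 2"] by simp
qed

lemma Jbound:
  fixes p :: "'i \<Rightarrow> real"
  assumes fin: "finite I" and nn: "\<And>i. i \<in> I \<Longrightarrow> 0 \<le> p i"
  shows "- (\<Sum>i\<in>I. p i * log 2 (p i)) \<le> sum p I * log 2 (card I) - sum p I * log 2 (sum p I)"
proof (cases "sum p I = 0")
  case True
  then have "\<forall>i\<in>I. p i = 0" using sum_nonneg_eq_0_iff[OF fin] nn by blast
  then show ?thesis by simp
next
  case False
  let ?P = "sum p I"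
  have P: "0 < ?P" using False sum_nonneg[of I p] nn by force
  have I: "I \<noteq> {}" using False by auto
  then have c: "0 < card I" using fin by (simp add: card_gt_0_iff)
  let ?b = "?P / card I"
  have b: "0 < ?b" using P c by simp
  have "(\<Sum>i\<in>I. (p i - ?b) / ln 2) \<le> (\<Sum>i\<in>I. p i * (log 2 (p i) - log 2 ?b))"
    by (rule sum_mono, rule KLterm) (use nn b in auto)
  moreover have "(\<Sum>i\<in>I. (p i - ?b) / ln 2) = 0"
    using c by (simp add: sum_divide_distrib[symmetric] sum_subtractf)
  moreover have "(\<Sum>i\<in>I. p i * (log 2 (p i) - log 2 ?b)) = (\<Sum>i\<in>I. p i * log 2 (p i)) - ?P * log 2 ?b"
    by (simp add: algebra_simps sum_subtractf sum_distrib_right)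
  moreover have "log 2 ?b = log 2 ?P - log 2 (card I)" using P c by (simp add: log_divide)
  ultimately show ?thesis by (simp add: algebra_simps)
qed

lemma binent_le1:
  fixes m :: real assumes "0 \<le> m" "m \<le> 1"
  shows "- (m * log 2 m) - (1 - m) * log 2 (1 - m) \<le> 1"
proof -
  let ?p = "\<lambda>b::bool. if b then m else 1 - m"
  have "- (\<Sum>i\<in>UNIV. ?p i * log 2 (?p i)) \<le> sum ?p UNIV * log 2 (card (UNIV::bool set)) - sum ?p UNIV * log 2 (sum ?p UNIV)"
    by (rule Jbound) (use assms in auto)
  then show ?thesis by (simp add: UNIV_bool)
qed

lemma xlnx_seq:
  fixes a :: "nat \<Rightarrow> real"
  assumes lim: "a \<longlonglongrightarrow> 0" and nn: "\<And>n. 0 \<le> a n"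
  shows "(\<lambda>n. a n * log 2 (a n)) \<longlonglongrightarrow> 0"
proof -
  have h: "((\<lambda>x::real. x * ln x) \<longlongrightarrow> 0) (at_right 0)" by real_asymp
  have "(\<lambda>n. a n * ln (a n)) \<longlonglongrightarrow> 0"
  proof (rule tendstoI)
    fix e :: real assume e: "0 < e"
    have "\<forall>\<^sub>F x::real in at_right 0. dist (x * ln x) 0 < e" using tendstoD[OF h e] .
    then obtain d where d: "d > 0" and H: "\<And>y. 0 < y \<Longrightarrow> y < d \<Longrightarrow> \<bar>y * ln y\<bar> < e"
      unfolding eventually_at_right_field dist_real_def by auto
    have "\<forall>\<^sub>F n in sequentially. dist (a n) 0 < d" using tendstoD[OF lim d] .
    then show "\<forall>\<^sub>F n in sequentially. dist (a n * ln (a n)) 0 < e"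
    proof (rule eventually_mono)
      fix n assume "dist (a n) 0 < d"
      then show "dist (a n * ln (a n)) 0 < e"
        using H[of "a n"] nn[of n] e by (cases "a n = 0") (auto simp: dist_real_def)
    qed
  qed
  then have "(\<lambda>n. a n * ln (a n) / ln 2) \<longlonglongrightarrow> 0 / ln 2" by (intro tendsto_divide) auto
  then show ?thesis by (simp add: log_def)
qed

lemma binary_bound:
  fixes x y u v :: real
  assumes nn: "0 \<le> x" "0 \<le> y" "0 \<le> u" "0 \<le> v" and s: "x + y + u + v = 1"
  shows "y * (- log 2 (1 - (x + u))) \<le>
    (- ((x+u) * log 2 (x+u) + (1-(x+u)) * log 2 (1-(x+u))) - ((x+y) * log 2 (x+y) + (1-(x+y)) * log 2 (1-(x+y)))
      + (x * log 2 x + y * log 2 y + u * log 2 u + v * log 2 v)) - x * log 2 x - y * log 2 y + y * log 2 (x + y)"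
proof -
  define m where "m = x + u"
  define c where "c = x + y"
  have m1: "1 - m = y + v" and c1: "1 - c = u + v" using s by (auto simp: m_def c_def)
  have lm': "log 2 m \<le> 0" 
  proof (cases "m = 0")
    case False then show ?thesis using nn s by (simp add: m_def)
  qed (simp add: log_def)
  have lc': "log 2 c \<le> 0"
  proof (cases "c = 0")
    case False then show ?thesis using nn s by (simp add: c_def)
  qed (simp add: log_def)
  have b3: "(u - m * (1 - c)) / ln 2 \<le> u * log 2 u - u * log 2 m - u * log 2 (1 - c)"
  proof (cases "u = 0")
    case True then show ?thesis using nn s by (simp add: divide_nonpos_pos m_def c_def)
  next
    case False
    then have "0 < u" using nn by simp
    then have p: "0 < m" "0 < 1 - c" using nn by (auto simp: m_def c1)
    have k: "(u - m * (1 - c)) / ln 2 \<le> u * (log 2 u - log 2 (m * (1 - c)))"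
      by (rule KLterm) (use nn p in auto)
    have e: "log 2 (m * (1 - c)) = log 2 m + log 2 (1 - c)" using p by (simp add: log_mult)
    show ?thesis using k unfolding e by (simp add: algebra_simps)
  qed
  have b4: "(v - (1 - m) * (1 - c)) / ln 2 \<le> v * log 2 v - v * log 2 (1 - m) - v * log 2 (1 - c)"
  proof (cases "v = 0")
    case True then show ?thesis using nn s by (simp add: divide_nonpos_pos m1 c1)
  next
    case False
    then have "0 < v" using nn by simp
    then have p: "0 < 1 - m" "0 < 1 - c" using nn by (auto simp: m1 c1)
    have k: "(v - (1 - m) * (1 - c)) / ln 2 \<le> v * (log 2 v - log 2 ((1 - m) * (1 - c)))"
      by (rule KLterm) (use nn p in auto)
    have e: "log 2 ((1 - m) * (1 - c)) = log 2 (1 - m) + log 2 (1 - c)" using p by (simp add: log_mult)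
    show ?thesis using k unfolding e by (simp add: algebra_simps)
  qed
  have b34: "0 \<le> (u * log 2 u - u * log 2 m - u * log 2 (1 - c)) + (v * log 2 v - v * log 2 (1 - m) - v * log 2 (1 - c))"
  proof -
    have "(u - m * (1 - c)) / ln 2 + (v - (1 - m) * (1 - c)) / ln 2 = (u + v - (1 - c)) / ln 2"
      by (simp add: field_simps)
    also have "\<dots> = 0" using c1 by simp
    finally show ?thesis using b3 b4 by linarith
  qed
  have b1: "0 \<le> - x * log 2 m - x * log 2 c"
  proof -
    have "x * log 2 m \<le> 0" "x * log 2 c \<le> 0" using lm' lc' nn by (auto simp: mult_nonneg_nonpos)
    then show ?thesis by linarith
  qed
  have expand: "(- (m * log 2 m + (1-m) * log 2 (1-m)) - (c * log 2 c + (1-c) * log 2 (1-c))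
      + (x * log 2 x + y * log 2 y + u * log 2 u + v * log 2 v))
    = (x * log 2 x - x * log 2 m - x * log 2 c) + (y * log 2 y - y * log 2 (1 - m) - y * log 2 c)
      + (u * log 2 u - u * log 2 m - u * log 2 (1 - c)) + (v * log 2 v - v * log 2 (1 - m) - v * log 2 (1 - c))"
    unfolding m1 c1 by (simp add: m_def c_def algebra_simps)
  show ?thesis
    using expand b34 b1 unfolding m_def[symmetric] c_def[symmetric] by (simp add: algebra_simps)
qed


lemma prob_out:
  "x \<notin> X ` set_pmf M \<Longrightarrow> measure_pmf.prob M (X -` {x}) = 0"
proof -
  assume "x \<notin> X ` set_pmf M"
  then have "X -` {x} \<inter> set_pmf M = {}" by auto
  then show ?thesis by (metis measure_Int_set_pmf measure_empty)
qed

lemma ent_superset: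
  assumes fin: "finite (set_pmf M)" and A: "finite A" "X ` set_pmf M \<subseteq> A"
  shows "ent M X = - (\<Sum>x\<in>A. measure_pmf.prob M (X -` {x}) * log 2 (measure_pmf.prob M (X -` {x})))"
proof -
  have "(\<Sum>x\<in>X ` set_pmf M. measure_pmf.prob M (X -` {x}) * log 2 (measure_pmf.prob M (X -` {x})))
      = (\<Sum>x\<in>A. measure_pmf.prob M (X -` {x}) * log 2 (measure_pmf.prob M (X -` {x})))"
    by (rule sum.mono_neutral_left) (use A prob_out in auto)
  then show ?thesis unfolding ent_def by (simp add: sum_negf)
qed

lemma prob_total:
  assumes fin: "finite (set_pmf M)" and A: "finite A" "X ` set_pmf M \<subseteq> A"
  shows "(\<Sum>x\<in>A. measure_pmf.prob M (X -` {x})) = 1"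
proof -
  have "(\<Sum>x\<in>X ` set_pmf M. measure_pmf.prob M (X -` {x})) = (\<Sum>x\<in>A. measure_pmf.prob M (X -` {x}))"
    by (rule sum.mono_neutral_left) (use A prob_out in auto)
  moreover have "(\<Sum>x\<in>X ` set_pmf M. measure_pmf.prob M (X -` {x}) * 1) = (\<Sum>w\<in>set_pmf M. pmf M w * 1)"
    by (rule WX[OF fin])
  moreover have "(\<Sum>w\<in>set_pmf M. pmf M w) = 1" using fin by (simp add: sum_pmf_eq_1)
  ultimately show ?thesis by simp
qed

lemma ent_opt:
  assumes fin: "finite (set_pmf M)" and Fs: "finite Fs" "\<And>w. w \<in> set_pmf M \<Longrightarrow> F w \<in> Fs"
    and card: "card Fs \<le> 2 ^ k"
  shows "ent M (\<lambda>w. if E w then Some (F w) else None) \<le> 1 + measure_pmf.prob M {w. E w} * k"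
proof -
  let ?O = "\<lambda>w. if E w then Some (F w) else None"
  let ?Q = "\<lambda>q. measure_pmf.prob M (?O -` {q})"
  let ?A = "insert None (Some ` Fs)"
  have A: "finite ?A" "?O ` set_pmf M \<subseteq> ?A" using Fs by auto
  have nin: "None \<notin> Some ` Fs" by auto
  have e1: "ent M ?O = - (?Q None * log 2 (?Q None) + (\<Sum>f\<in>Fs. ?Q (Some f) * log 2 (?Q (Some f))))"
    unfolding ent_superset[OF fin A] using nin Fs by (simp add: sum.reindex)
  have t1: "?Q None + (\<Sum>f\<in>Fs. ?Q (Some f)) = 1"
    using prob_total[OF fin A] nin Fs by (simp add: sum.reindex)
  define m where "m = measure_pmf.prob M {w. E w}"
  have "?O -` {None} = UNIV - {w. E w}" by auto
  then have qn: "?Q None = 1 - m" unfolding m_def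
    using measure_pmf.prob_compl[of "{w. E w}" M] by simp
  have sm: "(\<Sum>f\<in>Fs. ?Q (Some f)) = m" using t1 qn by simp
  have m01: "0 \<le> m" "m \<le> 1" unfolding m_def by auto
  have J: "- (\<Sum>f\<in>Fs. ?Q (Some f) * log 2 (?Q (Some f))) \<le> m * log 2 (card Fs) - m * log 2 m"
    using Jbound[OF Fs(1), of "\<lambda>f. ?Q (Some f)"] sm by simp
  have lc: "log 2 (card Fs) \<le> k"
  proof (cases "card Fs = 0")
    case False
    then have "log 2 (card Fs) \<le> log 2 (2 ^ k)" using card by (subst log_le_cancel_iff) auto
    then show ?thesis by (simp add: log_nat_power)
  qed (simp add: log_def)
  have "m * log 2 (card Fs) \<le> m * k" using lc m01 by (simp add: mult_left_mono)
  moreover have "- (m * log 2 m) - (1 - m) * log 2 (1 - m) \<le> 1" by (rule binent_le1) (use m01 in auto)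
  ultimately show ?thesis unfolding e1 qn m_def[symmetric] using J by linarith
qed

lemma prob_split:
  "measure_pmf.prob M {w. P w} = measure_pmf.prob M {w. P w \<and> Q w} + measure_pmf.prob M {w. P w \<and> \<not> Q w}"
proof -
  have "{w. P w} = {w. P w \<and> Q w} \<union> {w. P w \<and> \<not> Q w}" by auto
  then show ?thesis by (metis (no_types, lifting) measure_pmf.finite_measure_Union sets_measure_pmf UNIV_I
      disjoint_iff mem_Collect_eq)
qed

lemma mi_bool:
  fixes B C :: "'w \<Rightarrow> bool"
  assumes fin: "finite (set_pmf M)"
  defines "x \<equiv> measure_pmf.prob M {w. B w \<and> C w}" and "y \<equiv> measure_pmf.prob M {w. \<not> B w \<and> C w}"
    and "u \<equiv> measure_pmf.prob M {w. B w \<and> \<not> C w}" and "v \<equiv> measure_pmf.prob M {w. \<not> B w \<and> \<not> C w}"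
  shows "x + y + u + v = 1"
    and "mut_inf M B C = (- ((x+u) * log 2 (x+u) + (1-(x+u)) * log 2 (1-(x+u))) - ((x+y) * log 2 (x+y) + (1-(x+y)) * log 2 (1-(x+y)))
      + (x * log 2 x + y * log 2 y + u * log 2 u + v * log 2 v))"
proof -
  have U: "(UNIV::(bool\<times>bool) set) = {(True,True),(True,False),(False,True),(False,False)}" by auto
  have p1: "(\<lambda>w. (B w, C w)) -` {(True,True)} = {w. B w \<and> C w}" by auto
  have p2: "(\<lambda>w. (B w, C w)) -` {(True,False)} = {w. B w \<and> \<not> C w}" by auto
  have p3: "(\<lambda>w. (B w, C w)) -` {(False,True)} = {w. \<not> B w \<and> C w}" by auto
  have p4: "(\<lambda>w. (B w, C w)) -` {(False,False)} = {w. \<not> B w \<and> \<not> C w}" by auto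
  have bt: "B -` {True} = {w. B w}" "B -` {False} = {w. \<not> B w}" by auto
  have ct: "C -` {True} = {w. C w}" "C -` {False} = {w. \<not> C w}" by auto
  have mB: "measure_pmf.prob M {w. B w} = x + u" "measure_pmf.prob M {w. \<not> B w} = y + v"
    unfolding x_def u_def y_def v_def by (rule prob_split)+
  have mC: "measure_pmf.prob M {w. C w} = x + y" "measure_pmf.prob M {w. \<not> C w} = u + v"
    using prob_split[of M C B] prob_split[of M "\<lambda>w. \<not> C w" B] unfolding x_def u_def y_def v_def
    by (simp_all add: conj_commute)
  have tot: "(\<Sum>t\<in>UNIV. measure_pmf.prob M ((\<lambda>w. (B w, C w)) -` {t})) = 1"
    by (rule prob_total[OF fin]) auto
  then show T: "x + y + u + v = 1" unfolding U using p1 p2 p3 p4 by (simp add: x_def y_def u_def v_def)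
  have eB: "ent M B = - ((x+u) * log 2 (x+u) + (y+v) * log 2 (y+v))"
    by (subst ent_superset[OF fin, of UNIV]) (auto simp: UNIV_bool bt mB)
  have eC: "ent M C = - ((x+y) * log 2 (x+y) + (u+v) * log 2 (u+v))"
    by (subst ent_superset[OF fin, of UNIV]) (auto simp: UNIV_bool ct mC)
  have eBC: "ent M (\<lambda>w. (B w, C w)) = - (x * log 2 x + u * log 2 u + y * log 2 y + v * log 2 v)"
    by (subst ent_superset[OF fin, of UNIV]) (auto simp: U p1 p2 p3 p4 x_def y_def u_def v_def)
  have e1: "y + v = 1 - (x + u)" and e2: "u + v = 1 - (x + y)" using T by auto
  show "mut_inf M B C = (- ((x+u) * log 2 (x+u) + (1-(x+u)) * log 2 (1-(x+u))) - ((x+y) * log 2 (x+y) + (1-(x+y)) * log 2 (1-(x+y)))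
      + (x * log 2 x + y * log 2 y + u * log 2 u + v * log 2 v))"
    unfolding mut_inf_def eB eC eBC e1 e2 by simp
qed


lemma mi_bound:
  fixes B C :: "'w \<Rightarrow> bool"
  assumes fin: "finite (set_pmf M)"
  defines "x \<equiv> measure_pmf.prob M {w. B w \<and> C w}" and "y \<equiv> measure_pmf.prob M {w. \<not> B w \<and> C w}"
  shows "y * (- log 2 (1 - measure_pmf.prob M {w. B w})) \<le>
    mut_inf M B C - x * log 2 x - y * log 2 y + y * log 2 (measure_pmf.prob M {w. C w})"
proof -
  define u where "u = measure_pmf.prob M {w. B w \<and> \<not> C w}"
  define v where "v = measure_pmf.prob M {w. \<not> B w \<and> \<not> C w}"
  have nn: "0 \<le> x" "0 \<le> y" "0 \<le> u" "0 \<le> v" by (auto simp: x_def y_def u_def v_def)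
  have T: "x + y + u + v = 1" unfolding x_def y_def u_def v_def by (rule mi_bool(1)[OF fin])
  have i: "mut_inf M B C = (- ((x+u) * log 2 (x+u) + (1-(x+u)) * log 2 (1-(x+u))) - ((x+y) * log 2 (x+y) + (1-(x+y)) * log 2 (1-(x+y)))
      + (x * log 2 x + y * log 2 y + u * log 2 u + v * log 2 v))"
    unfolding x_def y_def u_def v_def by (rule mi_bool(2)[OF fin])
  have b: "y * (- log 2 (1 - (x + u))) \<le>
    (- ((x+u) * log 2 (x+u) + (1-(x+u)) * log 2 (1-(x+u))) - ((x+y) * log 2 (x+y) + (1-(x+y)) * log 2 (1-(x+y)))
      + (x * log 2 x + y * log 2 y + u * log 2 u + v * log 2 v)) - x * log 2 x - y * log 2 y + y * log 2 (x + y)"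
    by (rule binary_bound[OF nn T])
  have eB: "measure_pmf.prob M {w. B w} = x + u" unfolding x_def u_def by (rule prob_split)
  have eC: "measure_pmf.prob M {w. C w} = x + y"
    using prob_split[of M C B] unfolding x_def y_def by (simp add: conj_commute)
  show ?thesis unfolding eB eC i using b .
qed

lemma claimB:
  fixes M :: "nat \<Rightarrow> 'w pmf" and B C :: "nat \<Rightarrow> 'w \<Rightarrow> bool" and J :: "nat \<Rightarrow> real"
  assumes fin: "\<And>n. finite (set_pmf (M n))"
    and Cp: "\<And>n. measure_pmf.prob (M n) {w. C n w} = c" and c: "0 < c"
    and x0: "(\<lambda>n. measure_pmf.prob (M n) {w. B n w \<and> C n w}) \<longlonglongrightarrow> 0"
    and IJ: "\<And>n. mut_inf (M n) (B n) (C n) \<le> J n" and J0: "J \<longlonglongrightarrow> 0"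
  shows "(\<lambda>n. measure_pmf.prob (M n) {w. B n w}) \<longlonglongrightarrow> 0"
proof -
  define x where "x n = measure_pmf.prob (M n) {w. B n w \<and> C n w}" for n
  define y where "y n = measure_pmf.prob (M n) {w. \<not> B n w \<and> C n w}" for n
  define u where "u n = measure_pmf.prob (M n) {w. B n w \<and> \<not> C n w}" for n
  define v where "v n = measure_pmf.prob (M n) {w. \<not> B n w \<and> \<not> C n w}" for n
  define m where "m n = measure_pmf.prob (M n) {w. B n w}" for n
  have nn: "0 \<le> x n" "0 \<le> y n" "0 \<le> u n" "0 \<le> v n" for n by (auto simp: x_def y_def u_def v_def)
  have T: "x n + y n + u n + v n = 1" for n unfolding x_def y_def u_def v_def by (rule mi_bool(1)[OF fin])
  have mxu: "m n = x n + u n" for n unfolding m_def x_def u_def by (rule prob_split)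
  have cxy: "c = x n + y n" for n
    using prob_split[of "M n" "C n" "B n"] Cp[of n] unfolding x_def y_def by (simp add: conj_commute)
  define R where "R n = J n - x n * log 2 (x n) - y n * log 2 (y n) + y n * log 2 c" for n
  have bb: "y n * (- log 2 (1 - m n)) \<le> R n" for n
  proof -
    have "y n * (- log 2 (1 - m n)) \<le> mut_inf (M n) (B n) (C n) - x n * log 2 (x n) - y n * log 2 (y n) + y n * log 2 c"
      using mi_bound[OF fin, of n "B n" "C n"] unfolding x_def y_def m_def Cp .
    then show ?thesis using IJ[of n] unfolding R_def by linarith
  qed
  have x0': "x \<longlonglongrightarrow> 0" using x0 unfolding x_def .
  have y_lim: "y \<longlonglongrightarrow> c"
  proof -
    have "(\<lambda>n. c - x n) \<longlonglongrightarrow> c - 0" by (intro tendsto_diff tendsto_const x0')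
    moreover have "y = (\<lambda>n. c - x n)" using cxy by (intro ext) (metis add_diff_cancel_left')
    ultimately show ?thesis by simp
  qed
  have R0: "R \<longlonglongrightarrow> 0"
  proof -
    have "(\<lambda>n. x n * log 2 (x n)) \<longlonglongrightarrow> 0" by (rule xlnx_seq[OF x0' nn(1)])
    moreover have "(\<lambda>n. y n * log 2 (y n)) \<longlonglongrightarrow> c * log 2 c"
      by (intro tendsto_mult y_lim tendsto_log tendsto_const) (use c in auto)
    moreover have "(\<lambda>n. y n * log 2 c) \<longlonglongrightarrow> c * log 2 c" by (intro tendsto_mult y_lim tendsto_const)
    ultimately have "(\<lambda>n. J n - x n * log 2 (x n) - y n * log 2 (y n) + y n * log 2 c) \<longlonglongrightarrow> 0 - 0 - c * log 2 c + c * log 2 c"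
      by (intro tendsto_add tendsto_diff J0)
    then show ?thesis unfolding R_def by simp
  qed
  have ev: "\<forall>\<^sub>F n in sequentially. c / 2 < y n"
    using tendstoD[OF y_lim, of "c/2"] c
  proof -
    have "\<forall>\<^sub>F n in sequentially. dist (y n) c < c / 2" using tendstoD[OF y_lim, of "c/2"] c by simp
    then show ?thesis by (rule eventually_mono) (auto simp: dist_real_def abs_if split: if_splits)
  qed
  have up: "\<forall>\<^sub>F n in sequentially. m n \<le> (2 * ln 2 / c) * R n"
    using ev
  proof (rule eventually_mono)
    fix n assume yn: "c / 2 < y n"
    have m1: "1 - m n \<ge> y n" using T[of n] mxu[of n] nn[of n] by simp
    then have pos: "0 < 1 - m n" using yn c by simp
    have "ln (1 - m n) \<le> (1 - m n) - 1" by (rule ln_le_minus_one[OF pos])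
    then have "m n \<le> - ln (1 - m n)" by simp
    then have "m n / ln 2 \<le> (- ln (1 - m n)) / ln 2" by (rule divide_right_mono) simp
    then have "m n / ln 2 \<le> - (ln (1 - m n) / ln 2)" by simp
    then have "m n / ln 2 \<le> - log 2 (1 - m n)" by (simp add: log_def)
    note h1 = this
    have "y n * (m n / ln 2) \<le> y n * (- log 2 (1 - m n))"
      by (rule mult_left_mono[OF h1 nn(2)])
    also have "\<dots> \<le> R n" by (rule bb)
    finally have h2: "y n * (m n / ln 2) \<le> R n" .
    have m0: "m n \<ge> 0" unfolding m_def by simp
    have "0 \<le> m n / ln 2" using m0 by simp
    then have "(c / 2) * (m n / ln 2) \<le> y n * (m n / ln 2)"
      by (rule mult_right_mono[OF less_imp_le[OF yn]])
    then have "(c / 2) * (m n / ln 2) \<le> R n" using h2 by linarith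
    then show "m n \<le> (2 * ln 2 / c) * R n" using c by (simp add: field_simps)
  qed
  have low: "\<forall>\<^sub>F n in sequentially. 0 \<le> m n" by (simp add: m_def)
  have lim: "(\<lambda>n. (2 * ln 2 / c) * R n) \<longlonglongrightarrow> (2 * ln 2 / c) * 0" by (intro tendsto_mult tendsto_const R0)
  have "m \<longlonglongrightarrow> 0"
  proof (rule tendsto_sandwich[of "\<lambda>n. 0" m sequentially "\<lambda>n. (2 * ln 2 / c) * R n"])
    show "\<forall>\<^sub>F n in sequentially. 0 \<le> m n" by (rule low)
    show "\<forall>\<^sub>F n in sequentially. m n \<le> (2 * ln 2 / c) * R n" by (rule up)
    show "(\<lambda>n. 0::real) \<longlonglongrightarrow> 0" by simp
    show "(\<lambda>n. (2 * ln 2 / c) * R n) \<longlonglongrightarrow> 0" using lim by simp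
  qed
  then show ?thesis unfolding m_def .
qed


lemma part:
  assumes fin: "finite (set_pmf M)"
  shows "measure_pmf.prob M A = (\<Sum>t\<in>T ` set_pmf M. measure_pmf.prob M (A \<inter> T -` {t}))"
proof -
  have "(\<Sum>t\<in>T ` set_pmf M. measure_pmf.prob M (A \<inter> T -` {t}))
      = (\<Sum>t\<in>T ` set_pmf M. \<Sum>w\<in>{w\<in>set_pmf M. T w = t}. (if w \<in> A then pmf M w else 0))"
  proof (rule sum.cong[OF refl])
    fix t
    have "A \<inter> T -` {t} \<inter> set_pmf M = {w\<in>set_pmf M. T w = t} \<inter> A" by auto
    then show "measure_pmf.prob M (A \<inter> T -` {t}) = (\<Sum>w\<in>{w\<in>set_pmf M. T w = t}. (if w \<in> A then pmf M w else 0))"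
      using fin by (simp add: prob_sum_pmf[OF fin] sum.inter_restrict)
  qed
  also have "\<dots> = (\<Sum>w\<in>set_pmf M. (if w \<in> A then pmf M w else 0))"
    by (rule sum.image_gen[OF fin, symmetric])
  also have "\<dots> = measure_pmf.prob M A"
  proof -
    have "sum (pmf M) (set_pmf M \<inter> A) = (\<Sum>w\<in>set_pmf M. (if w \<in> A then pmf M w else 0))"
      by (rule sum.inter_restrict[OF fin])
    then show ?thesis by (simp add: prob_sum_pmf[OF fin] Int_commute)
  qed
  finally show ?thesis by simp
qed

definition map_est :: "'w pmf \<Rightarrow> ('w \<Rightarrow> 'f) \<Rightarrow> ('w \<Rightarrow> 'v) \<Rightarrow> 'v \<Rightarrow> 'f" where
  "map_est M F V v = (SOME f. \<forall>f'. measure_pmf.prob M {w. F w = f' \<and> V w = v} \<le> measure_pmf.prob M {w. F w = f \<and> V w = v})"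

lemma map_est:
  assumes fin: "finite (set_pmf M)"
  shows "measure_pmf.prob M {w. F w = f' \<and> V w = v} \<le> measure_pmf.prob M {w. F w = map_est M F V v \<and> V w = v}"
proof -
  let ?q = "\<lambda>f. measure_pmf.prob M {w. F w = f \<and> V w = v}"
  let ?C = "F ` set_pmf M"
  have C: "finite ?C" "?C \<noteq> {}" using fin set_pmf_not_empty by auto
  have "Max (?q ` ?C) \<in> ?q ` ?C" by (rule Max_in) (use C in auto)
  then obtain f0 where f0: "f0 \<in> ?C" "?q f0 = Max (?q ` ?C)" by (metis (no_types, lifting) imageE)
  have "\<forall>f'. ?q f' \<le> ?q f0"
  proof
    fix f'
    show "?q f' \<le> ?q f0"
    proof (cases "f' \<in> ?C")
      case True then show ?thesis using f0 C by simp
    next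
      case False
      then have "{w. F w = f' \<and> V w = v} \<inter> set_pmf M = {}" by auto
      then have "?q f' = 0" by (metis measure_Int_set_pmf measure_empty)
      then show ?thesis by simp
    qed
  qed
  then have "\<forall>f'. ?q f' \<le> ?q (map_est M F V v)" unfolding map_est_def by (rule someI)
  then show ?thesis by blast
qed

lemma claimA:
  fixes M :: "'w pmf" and F :: "'w \<Rightarrow> 'f" and V :: "'w \<Rightarrow> 'v" and R :: "'w \<Rightarrow> 'r"
  assumes fin: "finite (set_pmf M)"
    and fact: "\<And>v f r. measure_pmf.prob M {w. F w = f \<and> V w = v \<and> R w = r} * measure_pmf.prob M {w. V w = v}
       = measure_pmf.prob M {w. F w = f \<and> V w = v} * measure_pmf.prob M {w. V w = v \<and> R w = r}"
  shows "measure_pmf.prob M {w. F w = d (V w) (R w) \<and> Zc (R w)} \<le> measure_pmf.prob M {w. F w = map_est M F V (V w) \<and> Zc (R w)}"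
proof -
  let ?T = "\<lambda>w. (V w, R w)"
  let ?g = "map_est M F V"
  have "measure_pmf.prob M {w. F w = d (V w) (R w) \<and> Zc (R w)} = (\<Sum>t\<in>?T ` set_pmf M. measure_pmf.prob M ({w. F w = d (V w) (R w) \<and> Zc (R w)} \<inter> ?T -` {t}))"
    by (rule part[OF fin])
  also have "\<dots> \<le> (\<Sum>t\<in>?T ` set_pmf M. measure_pmf.prob M ({w. F w = ?g (V w) \<and> Zc (R w)} \<inter> ?T -` {t}))"
  proof (rule sum_mono)
    fix t assume "t \<in> ?T ` set_pmf M"
    obtain v r where t: "t = (v, r)" by (cases t)
    show "measure_pmf.prob M ({w. F w = d (V w) (R w) \<and> Zc (R w)} \<inter> ?T -` {t}) \<le> measure_pmf.prob M ({w. F w = ?g (V w) \<and> Zc (R w)} \<inter> ?T -` {t})"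
    proof (cases "Zc r")
      case False
      then have "{w. F w = d (V w) (R w) \<and> Zc (R w)} \<inter> ?T -` {t} = {}" using t by auto
      then show ?thesis by simp
    next
      case True
      have e1: "{w. F w = d (V w) (R w) \<and> Zc (R w)} \<inter> ?T -` {t} = {w. F w = d v r \<and> V w = v \<and> R w = r}" using t True by auto
      have e2: "{w. F w = ?g (V w) \<and> Zc (R w)} \<inter> ?T -` {t} = {w. F w = ?g v \<and> V w = v \<and> R w = r}" using t True by auto
      let ?pv = "measure_pmf.prob M {w. V w = v}"
      show ?thesis unfolding e1 e2
      proof (cases "?pv = 0")
        case True
        have "measure_pmf.prob M {w. F w = d v r \<and> V w = v \<and> R w = r} \<le> ?pv"
          by (rule measure_pmf.finite_measure_mono) auto
        then show "measure_pmf.prob M {w. F w = d v r \<and> V w = v \<and> R w = r} \<le> measure_pmf.prob M {w. F w = ?g v \<and> V w = v \<and> R w = r}"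
          using True measure_nonneg[of "measure_pmf M" "{w. F w = ?g v \<and> V w = v \<and> R w = r}"] by linarith
      next
        case False
        then have pv: "0 < ?pv" by (simp add: zero_less_measure_iff)
        have "measure_pmf.prob M {w. F w = d v r \<and> V w = v \<and> R w = r} * ?pv
          = measure_pmf.prob M {w. F w = d v r \<and> V w = v} * measure_pmf.prob M {w. V w = v \<and> R w = r}" by (rule fact)
        also have "\<dots> \<le> measure_pmf.prob M {w. F w = ?g v \<and> V w = v} * measure_pmf.prob M {w. V w = v \<and> R w = r}"
          by (rule mult_right_mono[OF map_est[OF fin]]) simp
        also have "\<dots> = measure_pmf.prob M {w. F w = ?g v \<and> V w = v \<and> R w = r} * ?pv" by (rule fact[symmetric])
        finally show "measure_pmf.prob M {w. F w = d v r \<and> V w = v \<and> R w = r} \<le> measure_pmf.prob M {w. F w = ?g v \<and> V w = v \<and> R w = r}"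
          using pv by simp
      qed
    qed
  qed
  also have "\<dots> = measure_pmf.prob M {w. F w = ?g (V w) \<and> Zc (R w)}"
    by (rule part[OF fin, symmetric])
  finally show ?thesis .
qed


lemma bool_lists: "finite {xs::bool list. length xs = k}" "card {xs::bool list. length xs = k} = 2 ^ k"
proof -
  have e: "{xs::bool list. length xs = k} = {xs. set xs \<subseteq> UNIV \<and> length xs = k}" by auto
  show "finite {xs::bool list. length xs = k}" unfolding e by (rule finite_lists_length_eq) simp
  show "card {xs::bool list. length xs = k} = 2 ^ k" unfolding e using card_lists_length_eq[of "UNIV::bool set" k] by simp
qed


lemma all_files_nth: "l \<in> {1..L} \<Longrightarrow> all_files L f ! (l - 1) = f l"
  unfolding all_files_def by (subst nth_map) (auto simp: nth_upt simp del: upt_Suc)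

lemma server_bound:
  fixes M :: "nat \<Rightarrow> 'w pmf" and F :: "'w \<Rightarrow> files" and L :: nat and len :: "nat \<Rightarrow> nat"
    and Xs :: "nat \<Rightarrow> 'w \<Rightarrow> 'x" and Aa :: "nat \<Rightarrow> 'w \<Rightarrow> 'a" and U :: "'w \<Rightarrow> 'u"
    and Zown Za Zb :: "'w \<Rightarrow> nat" and \<gamma> :: "nat \<times> nat \<Rightarrow> nat"
    and R :: "nat \<Rightarrow> 'w \<Rightarrow> 'r" and \<zeta> :: "'r \<Rightarrow> nat" and d :: "nat \<Rightarrow> 'x \<times> 'a \<Rightarrow> 'r \<Rightarrow> bool list"
    and p :: "nat \<Rightarrow> real" and K :: real
  assumes fin: "\<And>n. finite (set_pmf (M n))"
    and L: "1 \<le> L"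
    and flen: "\<And>n w l. w \<in> set_pmf (M n) \<Longrightarrow> l \<in> {1..L} \<Longrightarrow> length (F w l) = len n"
    and lenK: "\<And>n. real (len n) \<le> real n * K"
    and Zg: "\<And>w. Zown w = \<gamma> (Za w, Zb w)"
    and Zr: "\<And>n w. Zown w = \<zeta> (R n w)"
    and Zp: "\<And>n l. l \<in> {1..L} \<Longrightarrow> measure_pmf.prob (M n) {w. Zown w = l} = 1 / L"
    and fact: "\<And>n v A B. measure_pmf.prob (M n) {w. F w \<in> A \<and> (Xs n w, Aa n w) = v \<and> R n w \<in> B}
        * measure_pmf.prob (M n) {w. (Xs n w, Aa n w) = v}
      = measure_pmf.prob (M n) {w. F w \<in> A \<and> (Xs n w, Aa n w) = v}
        * measure_pmf.prob (M n) {w. (Xs n w, Aa n w) = v \<and> R n w \<in> B}"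
    and err: "\<And>n. measure_pmf.prob (M n) {w. d n (Xs n w, Aa n w) (R n w) \<noteq> F w (Zown w)} \<le> p n"
    and p0: "p \<longlonglongrightarrow> 0"
    and I0: "(\<lambda>n. mut_inf (M n) (\<lambda>w. (all_files L (F w), Xs n w, U w, Aa n w)) (\<lambda>w. (Za w, Zb w))) \<longlonglongrightarrow> 0"
  shows "(\<lambda>n. cond_ent (M n) (\<lambda>w. other_files L (F w) (Zown w)) (\<lambda>w. (Xs n w, Aa n w, Za w, Zb w)) / real n) \<longlonglongrightarrow> 0"
proof -
  define V where "V n w = (Xs n w, Aa n w)" for n w
  define g where "g n l = map_est (M n) (\<lambda>w. F w l) (V n)" for n l
  define E where "E n l w = (g n l (V n w) \<noteq> F w l)" for n l w
  define m where "m n l = measure_pmf.prob (M n) {w. E n l w}" for n l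
  define J where "J n = mut_inf (M n) (\<lambda>w. (all_files L (F w), Xs n w, U w, Aa n w)) (\<lambda>w. (Za w, Zb w))" for n
  have step1: "measure_pmf.prob (M n) {w. E n l w \<and> Zown w = l} \<le> p n" if l: "l \<in> {1..L}" for n l
  proof -
    have fact': "measure_pmf.prob (M n) {w. F w l = f \<and> V n w = v \<and> R n w = r} * measure_pmf.prob (M n) {w. V n w = v}
       = measure_pmf.prob (M n) {w. F w l = f \<and> V n w = v} * measure_pmf.prob (M n) {w. V n w = v \<and> R n w = r}" for v f r
      using fact[of n "{h. h l = f}" v "{r}"] unfolding V_def by simp
    have A: "measure_pmf.prob (M n) {w. F w l = d n (V n w) (R n w) \<and> \<zeta> (R n w) = l}
        \<le> measure_pmf.prob (M n) {w. F w l = g n l (V n w) \<and> \<zeta> (R n w) = l}"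
      unfolding g_def by (rule claimA[OF fin fact'])
    have s1: "measure_pmf.prob (M n) {w. \<zeta> (R n w) = l} = measure_pmf.prob (M n) {w. \<zeta> (R n w) = l \<and> F w l = g n l (V n w)}
       + measure_pmf.prob (M n) {w. \<zeta> (R n w) = l \<and> \<not> F w l = g n l (V n w)}" by (rule prob_split)
    have s2: "measure_pmf.prob (M n) {w. \<zeta> (R n w) = l} = measure_pmf.prob (M n) {w. \<zeta> (R n w) = l \<and> F w l = d n (V n w) (R n w)}
       + measure_pmf.prob (M n) {w. \<zeta> (R n w) = l \<and> \<not> F w l = d n (V n w) (R n w)}" by (rule prob_split)
    have "measure_pmf.prob (M n) {w. \<zeta> (R n w) = l \<and> \<not> F w l = d n (V n w) (R n w)}
        \<le> measure_pmf.prob (M n) {w. d n (Xs n w, Aa n w) (R n w) \<noteq> F w (Zown w)}"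
      by (rule measure_pmf.finite_measure_mono) (auto simp: V_def Zr[of _ n])
    also have "\<dots> \<le> p n" by (rule err)
    finally have "measure_pmf.prob (M n) {w. \<zeta> (R n w) = l \<and> \<not> F w l = g n l (V n w)} \<le> p n"
      using A s1 s2 by (simp add: conj_commute)
    moreover have "{w. E n l w \<and> Zown w = l} = {w. \<zeta> (R n w) = l \<and> \<not> F w l = g n l (V n w)}"
      by (auto simp: E_def Zr[of _ n])
    ultimately show ?thesis by simp
  qed
  have step2: "(\<lambda>n. m n l) \<longlonglongrightarrow> 0" if l: "l \<in> {1..L}" for l
  proof -
    have Lpos: "0 < (1::real) / L" using L by simp
    have x0: "(\<lambda>n. measure_pmf.prob (M n) {w. E n l w \<and> Zown w = l}) \<longlonglongrightarrow> 0"
    proof (rule tendsto_sandwich[of "\<lambda>n. 0" _ sequentially p])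
      show "\<forall>\<^sub>F n in sequentially. 0 \<le> measure_pmf.prob (M n) {w. E n l w \<and> Zown w = l}" by simp
      show "\<forall>\<^sub>F n in sequentially. measure_pmf.prob (M n) {w. E n l w \<and> Zown w = l} \<le> p n"
        using step1[OF l] by simp
      show "(\<lambda>n. 0::real) \<longlonglongrightarrow> 0" by simp
      show "p \<longlonglongrightarrow> 0" by (rule p0)
    qed
    have IJ: "mut_inf (M n) (E n l) (\<lambda>w. Zown w = l) \<le> J n" for n
    proof -
      let ?\<beta> = "\<lambda>(af :: bool list list, x, u :: 'u, a). g n l (x, a) \<noteq> af ! (l - 1)"
      let ?c = "\<lambda>z. \<gamma> z = l"
      have e1: "E n l = (\<lambda>w. ?\<beta> (all_files L (F w), Xs n w, U w, Aa n w))"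
      proof (rule ext)
        fix w show "E n l w = ?\<beta> (all_files L (F w), Xs n w, U w, Aa n w)"
          using all_files_nth[OF l, of "F w"] by (simp add: E_def V_def)
      qed
      have e2: "(\<lambda>w. Zown w = l) = (\<lambda>w. ?c (Za w, Zb w))" by (rule ext) (simp add: Zg)
      show ?thesis unfolding J_def e1 e2 by (rule mut_inf_mono[OF fin])
    qed
    have Cp: "measure_pmf.prob (M n) {w. Zown w = l} = 1 / L" for n by (rule Zp[OF l])
    have J0: "J \<longlonglongrightarrow> 0" unfolding J_def by (rule I0)
    have "(\<lambda>n. measure_pmf.prob (M n) {w. E n l w}) \<longlonglongrightarrow> 0"
      by (rule claimB[OF fin Cp Lpos x0 IJ J0])
    then show ?thesis unfolding m_def .
  qed
  \<comment> \<open>Step 3: Fano-type bound\<close>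
  have step3: "cond_ent (M n) (\<lambda>w. other_files L (F w) (Zown w)) (\<lambda>w. (Xs n w, Aa n w, Za w, Zb w))
      \<le> (\<Sum>l\<in>{1..L}. 1 + m n l * len n)" for n
  proof -
    define opt where "opt l w = (if E n l w then Some (F w l) else None)" for l w
    define \<phi> where "\<phi> = (\<lambda>(x, a, za, zb) (k :: bool list option list).
       map (\<lambda>l. case k ! (l - 1) of None \<Rightarrow> g n l (x, a) | Some f \<Rightarrow> f) (filter (\<lambda>l. l \<noteq> \<gamma> (za, zb)) [1..<Suc L]))"
    have eq: "other_files L (F w) (Zown w) = \<phi> (Xs n w, Aa n w, Za w, Zb w) (map (\<lambda>l. opt l w) [1..<Suc L])" for w
    proof -
      have s: "\<phi> (x, a, za, zb) k = map (\<lambda>l. case k ! (l - 1) of None \<Rightarrow> g n l (x, a) | Some f \<Rightarrow> f)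
          (filter (\<lambda>l. l \<noteq> \<gamma> (za, zb)) [1..<Suc L])" for x a za zb k by (simp add: \<phi>_def)
      show ?thesis unfolding other_files_def s Zg[symmetric]
      proof (rule map_cong[OF refl])
        fix l assume "l \<in> set (filter (\<lambda>l. l \<noteq> Zown w) [1..<Suc L])"
        then have l: "l \<in> {1..L}" by auto
        then have "map (\<lambda>l. opt l w) [1..<Suc L] ! (l - 1) = opt l w" by (subst nth_map) (auto simp: nth_upt simp del: upt_Suc)
        then show "F w l = (case map (\<lambda>l. opt l w) [1..<Suc L] ! (l - 1) of None \<Rightarrow> g n l (Xs n w, Aa n w) | Some f \<Rightarrow> f)"
          by (simp add: opt_def E_def V_def)
      qed
    qed
    have "cond_ent (M n) (\<lambda>w. other_files L (F w) (Zown w)) (\<lambda>w. (Xs n w, Aa n w, Za w, Zb w))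
        \<le> ent (M n) (\<lambda>w. map (\<lambda>l. opt l w) [1..<Suc L])"
      by (rule cond_ent_fun[OF fin[of n], where \<phi>=\<phi> and Y="\<lambda>w. (Xs n w, Aa n w, Za w, Zb w)" and K="\<lambda>w. map (\<lambda>l. opt l w) [1..<Suc L]"]) (rule eq)
    also have "\<dots> \<le> (\<Sum>l\<leftarrow>[1..<Suc L]. ent (M n) (opt l))" by (rule ent_list[OF fin])
    also have "\<dots> = (\<Sum>l\<in>{1..L}. ent (M n) (opt l))"
    proof -
      have "(\<Sum>l\<leftarrow>[1..<Suc L]. ent (M n) (opt l)) = (\<Sum>l\<in>set [1..<Suc L]. ent (M n) (opt l))"
        by (rule sum_set_upt_conv_sum_list_nat[symmetric])
      also have "set [1..<Suc L] = {1..L}" by auto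
      finally show ?thesis .
    qed
    also have "\<dots> \<le> (\<Sum>l\<in>{1..L}. 1 + m n l * len n)"
    proof (rule sum_mono)
      fix l assume l: "l \<in> {1..L}"
      show "ent (M n) (opt l) \<le> 1 + m n l * len n"
        unfolding opt_def m_def
        by (rule ent_opt[OF fin bool_lists(1)]) (use flen[OF _ l] bool_lists(2) in auto)
    qed
    finally show ?thesis .
  qed
  have up: "cond_ent (M n) (\<lambda>w. other_files L (F w) (Zown w)) (\<lambda>w. (Xs n w, Aa n w, Za w, Zb w)) / real n
      \<le> real L / real n + K * (\<Sum>l\<in>{1..L}. m n l)" if n: "1 \<le> n" for n
  proof -
    have np: "0 < real n" using n by simp
    have "(\<Sum>l\<in>{1..L}. 1 + m n l * len n) = real L + (\<Sum>l\<in>{1..L}. m n l * len n)"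
      by (simp add: sum.distrib)
    also have "(\<Sum>l\<in>{1..L}. m n l * len n) \<le> (\<Sum>l\<in>{1..L}. m n l * (real n * K))"
      by (rule sum_mono, rule mult_left_mono[OF lenK]) (simp add: m_def)
    finally have "(\<Sum>l\<in>{1..L}. 1 + m n l * len n) \<le> real L + real n * (K * (\<Sum>l\<in>{1..L}. m n l))"
      by (simp add: sum_distrib_left sum_distrib_right algebra_simps)
    then have "cond_ent (M n) (\<lambda>w. other_files L (F w) (Zown w)) (\<lambda>w. (Xs n w, Aa n w, Za w, Zb w))
        \<le> real L + real n * (K * (\<Sum>l\<in>{1..L}. m n l))" using step3[of n] by linarith
    then show ?thesis using np by (simp add: field_simps)
  qed
  have lim: "(\<lambda>n. real L / real n + K * (\<Sum>l\<in>{1..L}. m n l)) \<longlonglongrightarrow> 0 + K * (\<Sum>l\<in>{1..L}. 0)"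
    by (intro tendsto_add tendsto_mult tendsto_const lim_const_over_n tendsto_sum step2)
  show ?thesis
  proof (rule tendsto_sandwich[of "\<lambda>n. 0" _ _ "\<lambda>n. real L / real n + K * (\<Sum>l\<in>{1..L}. m n l)"])
    show "\<forall>\<^sub>F n in sequentially. 0 \<le> cond_ent (M n) (\<lambda>w. other_files L (F w) (Zown w)) (\<lambda>w. (Xs n w, Aa n w, Za w, Zb w)) / real n"
      by (rule always_eventually, rule allI, rule divide_nonneg_nonneg[OF cond_ent_nonneg[OF fin]]) simp
    show "\<forall>\<^sub>F n in sequentially. cond_ent (M n) (\<lambda>w. other_files L (F w) (Zown w)) (\<lambda>w. (Xs n w, Aa n w, Za w, Zb w)) / real n
        \<le> real L / real n + K * (\<Sum>l\<in>{1..L}. m n l)"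
      using eventually_ge_at_top[of 1] by (rule eventually_mono) (rule up)
    show "(\<lambda>n. 0::real) \<longlonglongrightarrow> 0" by simp
    show "(\<lambda>n. real L / real n + K * (\<Sum>l\<in>{1..L}. m n l)) \<longlonglongrightarrow> 0" using lim by simp
  qed
qed


definition cs :: "(nat \<Rightarrow> nat list \<Rightarrow> nat) \<Rightarrow> (nat \<times> nat) list \<Rightarrow> bool" where
  "cs srv ps = (\<forall>j<length ps. snd (ps ! j) = srv (Suc j) (map fst (take j ps)))"

definition cc :: "(nat \<Rightarrow> nat list \<Rightarrow> nat) \<Rightarrow> (nat \<times> nat) list \<Rightarrow> bool" where
  "cc cli ps = (\<forall>j<length ps. fst (ps ! j) = cli (Suc j) (map snd (take (Suc j) ps)))"

lemma run_rounds_0: "run_rounds 0 srv cli = []"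
  by (simp add: run_rounds_def)

lemma run_rounds_Suc: "run_rounds (Suc r) srv cli =
  (let ps = run_rounds r srv cli; s = srv (Suc r) (map fst ps); c = cli (Suc r) (map snd ps @ [s]) in ps @ [(c, s)])"
  by (simp add: run_rounds_def Let_def)

lemma cs_snoc: "cs srv (qs @ [p]) \<longleftrightarrow> cs srv qs \<and> snd p = srv (Suc (length qs)) (map fst qs)"
  unfolding cs_def
proof safe
  assume h: "\<forall>j<length (qs @ [p]). snd ((qs @ [p]) ! j) = srv (Suc j) (map fst (take j (qs @ [p])))"
  show "snd p = srv (Suc (length qs)) (map fst qs)" using h[rule_format, of "length qs"] by simp
  fix j assume "j < length qs"
  then show "snd (qs ! j) = srv (Suc j) (map fst (take j qs))" using h[rule_format, of j] by (simp add: nth_append)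
next
  fix j assume h: "\<forall>j<length qs. snd (qs ! j) = srv (Suc j) (map fst (take j qs))"
    and p: "snd p = srv (Suc (length qs)) (map fst qs)" and j: "j < length (qs @ [p])"
  show "snd ((qs @ [p]) ! j) = srv (Suc j) (map fst (take j (qs @ [p])))"
  proof (cases "j < length qs")
    case True then show ?thesis using h by (simp add: nth_append)
  next
    case False then have "j = length qs" using j by simp
    then show ?thesis using p by simp
  qed
qed

lemma cc_snoc: "cc cli (qs @ [p]) \<longleftrightarrow> cc cli qs \<and> fst p = cli (Suc (length qs)) (map snd qs @ [snd p])"
  unfolding cc_def
proof safe
  assume h: "\<forall>j<length (qs @ [p]). fst ((qs @ [p]) ! j) = cli (Suc j) (map snd (take (Suc j) (qs @ [p])))"
  show "fst p = cli (Suc (length qs)) (map snd qs @ [snd p])" using h[rule_format, of "length qs"] by simp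
  fix j assume "j < length qs"
  then show "fst (qs ! j) = cli (Suc j) (map snd (take (Suc j) qs))" using h[rule_format, of j] by (simp add: nth_append)
next
  fix j assume h: "\<forall>j<length qs. fst (qs ! j) = cli (Suc j) (map snd (take (Suc j) qs))"
    and p: "fst p = cli (Suc (length qs)) (map snd qs @ [snd p])" and j: "j < length (qs @ [p])"
  show "fst ((qs @ [p]) ! j) = cli (Suc j) (map snd (take (Suc j) (qs @ [p])))"
  proof (cases "j < length qs")
    case True then show ?thesis using h by (simp add: nth_append)
  next
    case False then have "j = length qs" using j by simp
    then show ?thesis using p by simp
  qed
qed

lemma rr_iff: "run_rounds r srv cli = ps \<longleftrightarrow> length ps = r \<and> cs srv ps \<and> cc cli ps"
proof (induction r arbitrary: ps)
  case 0
  then show ?case by (auto simp: run_rounds_0 cs_def cc_def)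
next
  case (Suc r)
  show ?case
  proof (cases ps rule: rev_exhaust)
    case Nil
    then show ?thesis by (simp add: run_rounds_Suc Let_def)
  next
    case (snoc qs p)
    obtain c s where p: "p = (c, s)" by (cases p)
    show ?thesis unfolding snoc p run_rounds_Suc Let_def append1_eq_conv cs_snoc cc_snoc
      using Suc.IH[of qs] by auto
  qed
qed


lemma prob_pair:
  assumes "finite (set_pmf A)" "finite (set_pmf B)"
  shows "measure_pmf.prob (pair_pmf A B) (X \<times> Y) = measure_pmf.prob A X * measure_pmf.prob B Y"
proof -
  have "measure_pmf.prob (pair_pmf A B) (X \<times> Y) = measure_pmf.prob (pair_pmf A B) ((X \<times> Y) \<inter> set_pmf (pair_pmf A B))"
    by (rule measure_Int_set_pmf[symmetric])
  also have "(X \<times> Y) \<inter> set_pmf (pair_pmf A B) = (X \<inter> set_pmf A) \<times> (Y \<inter> set_pmf B)"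
    by (auto simp: set_pair_pmf)
  also have "measure_pmf.prob (pair_pmf A B) \<dots> = measure_pmf.prob A (X \<inter> set_pmf A) * measure_pmf.prob B (Y \<inter> set_pmf B)"
    by (rule measure_pmf_prob_product) (use assms in \<open>auto intro: countable_finite\<close>)
  finally show ?thesis by (simp add: measure_Int_set_pmf)
qed

definition "F1s L1 P = pmf_of_set (file_set L1 (len1 P))"
definition "F2s L2 P = pmf_of_set (file_set L2 (len2 P))"
definition "Zs L = pmf_of_set {1..L::nat}"

definition mk1 :: "(files \<times> nat) \<times> (files \<times> nat \<times> nat \<times> nat \<times> nat) \<Rightarrow> spir_sample" where
  "mk1 = (\<lambda>((f1, u1), (f2, u0, u2, z1, z2)). \<lparr>sF1 = f1, sF2 = f2, sU0 = u0, sU1 = u1, sU2 = u2, sZ1 = z1, sZ2 = z2\<rparr>)"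

definition mk2 :: "(files \<times> nat) \<times> (files \<times> nat \<times> nat \<times> nat \<times> nat) \<Rightarrow> spir_sample" where
  "mk2 = (\<lambda>((f2, u2), (f1, u0, u1, z1, z2)). \<lparr>sF1 = f1, sF2 = f2, sU0 = u0, sU1 = u1, sU2 = u2, sZ1 = z1, sZ2 = z2\<rparr>)"

definition "D11 L1 P = pair_pmf (F1s L1 P) (pU1 P)"
definition "D12 L1 L2 P = pair_pmf (F2s L2 P) (pair_pmf (pU0 P) (pair_pmf (pU2 P) (pair_pmf (Zs L1) (Zs L2))))"
definition "D21 L2 P = pair_pmf (F2s L2 P) (pU2 P)"
definition "D22 L1 L2 P = pair_pmf (F1s L1 P) (pair_pmf (pU0 P) (pair_pmf (pU1 P) (pair_pmf (Zs L1) (Zs L2))))"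

lemma sample_alt1: "sample_pmf L1 L2 P = map_pmf mk1 (pair_pmf (D11 L1 P) (D12 L1 L2 P))"
  unfolding sample_pmf_def D11_def D12_def F1s_def[symmetric] F2s_def[symmetric] Zs_def[symmetric]
  by (simp add: pair_pmf_def map_pmf_def bind_assoc_pmf bind_return_pmf mk1_def bind_commute_pmf[of _ "pU1 P"])

lemma sample_alt2: "sample_pmf L1 L2 P = map_pmf mk2 (pair_pmf (D21 L2 P) (D22 L1 L2 P))"
proof -
  have "sample_pmf L1 L2 P = pU2 P \<bind> (\<lambda>u2. F2s L2 P \<bind> (\<lambda>f2. F1s L1 P \<bind> (\<lambda>f1. pU0 P \<bind> (\<lambda>u0. pU1 P \<bind> (\<lambda>u1.
     Zs L1 \<bind> (\<lambda>z1. Zs L2 \<bind> (\<lambda>z2. return_pmf \<lparr>sF1 = f1, sF2 = f2, sU0 = u0, sU1 = u1, sU2 = u2, sZ1 = z1, sZ2 = z2\<rparr>)))))))"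
    unfolding sample_pmf_def F1s_def[symmetric] F2s_def[symmetric] Zs_def[symmetric]
    by (simp add: bind_commute_pmf[of _ "pU2 P"] bind_commute_pmf[of "F1s L1 P" "F2s L2 P"])
  also have "\<dots> = map_pmf mk2 (pair_pmf (D21 L2 P) (D22 L1 L2 P))"
    unfolding D21_def D22_def
    by (simp add: pair_pmf_def map_pmf_def bind_assoc_pmf bind_return_pmf mk2_def bind_commute_pmf[of _ "pU2 P"])
  finally show ?thesis .
qed

lemma bool_lists0: "finite {xs::bool list. length xs = k}"
proof -
  have e: "{xs::bool list. length xs = k} = {xs. set xs \<subseteq> UNIV \<and> length xs = k}" by auto
  show ?thesis unfolding e by (rule finite_lists_length_eq) simp
qed

lemma fs_fin: "finite (file_set L k)"
  unfolding file_set_def by (rule finite_PiE) (auto simp: bool_lists0)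

lemma fs_ne: "file_set L k \<noteq> {}"
  unfolding file_set_def PiE_eq_empty_iff by (auto intro: exI[of _ "replicate k False"])

lemma fs_len: "f \<in> file_set L k \<Longrightarrow> l \<in> {1..L} \<Longrightarrow> length (f l) = k"
  unfolding file_set_def by (auto dest: PiE_mem)

lemma set_F1s[simp]: "set_pmf (F1s L1 P) = file_set L1 (len1 P)"
  unfolding F1s_def by (simp add: fs_fin fs_ne)
lemma set_F2s[simp]: "set_pmf (F2s L2 P) = file_set L2 (len2 P)"
  unfolding F2s_def by (simp add: fs_fin fs_ne)
lemma set_Zs[simp]: "1 \<le> L \<Longrightarrow> set_pmf (Zs L) = {1..L}"
  unfolding Zs_def by simp

lemma fin_D: assumes "valid_protocol P" "1 \<le> L1" "1 \<le> L2"
  shows "finite (set_pmf (D11 L1 P))" "finite (set_pmf (D12 L1 L2 P))"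
    "finite (set_pmf (D21 L2 P))" "finite (set_pmf (D22 L1 L2 P))"
  using assms by (auto simp: D11_def D12_def D21_def D22_def set_pair_pmf fs_fin valid_protocol_def)

lemma fin_sample: assumes "valid_protocol P" "1 \<le> L1" "1 \<le> L2"
  shows "finite (set_pmf (sample_pmf L1 L2 P))"
  unfolding sample_alt1 using fin_D[OF assms] by (simp add: set_pair_pmf)

lemma supp_sample: assumes "1 \<le> L1" "1 \<le> L2" and w: "w \<in> set_pmf (sample_pmf L1 L2 P)"
  shows "sF1 w \<in> file_set L1 (len1 P)" "sF2 w \<in> file_set L2 (len2 P)"
  using w assms unfolding sample_alt1 by (auto simp: D11_def D12_def set_pair_pmf mk1_def)

lemma prod1:
  assumes "valid_protocol P" "1 \<le> L1" "1 \<le> L2"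
  shows "measure_pmf.prob (sample_pmf L1 L2 P) {w. \<Phi> (sF1 w, sU1 w) \<and> \<Psi> (sF2 w, sU0 w, sU2 w, sZ1 w, sZ2 w)}
    = measure_pmf.prob (D11 L1 P) {a. \<Phi> a} * measure_pmf.prob (D12 L1 L2 P) {b. \<Psi> b}"
proof -
  have "mk1 -` {w. \<Phi> (sF1 w, sU1 w) \<and> \<Psi> (sF2 w, sU0 w, sU2 w, sZ1 w, sZ2 w)} = {a. \<Phi> a} \<times> {b. \<Psi> b}"
    by (auto simp: mk1_def split: prod.splits)
  then show ?thesis unfolding sample_alt1 measure_map_pmf
    using prob_pair[OF fin_D(1,2)[OF assms]] by simp
qed

lemma prod2:
  assumes "valid_protocol P" "1 \<le> L1" "1 \<le> L2"
  shows "measure_pmf.prob (sample_pmf L1 L2 P) {w. \<Phi> (sF2 w, sU2 w) \<and> \<Psi> (sF1 w, sU0 w, sU1 w, sZ1 w, sZ2 w)}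
    = measure_pmf.prob (D21 L2 P) {a. \<Phi> a} * measure_pmf.prob (D22 L1 L2 P) {b. \<Psi> b}"
proof -
  have "mk2 -` {w. \<Phi> (sF2 w, sU2 w) \<and> \<Psi> (sF1 w, sU0 w, sU1 w, sZ1 w, sZ2 w)} = {a. \<Phi> a} \<times> {b. \<Psi> b}"
    by (auto simp: mk2_def split: prod.splits)
  then show ?thesis unfolding sample_alt2 measure_map_pmf
    using prob_pair[OF fin_D(3,4)[OF assms]] by simp
qed

lemma Z1_marg: assumes "1 \<le> L1" "l \<in> {1..L1}"
  shows "measure_pmf.prob (sample_pmf L1 L2 P) {w. sZ1 w = l} = 1 / L1"
proof -
  have mp: "map_pmf sZ1 (sample_pmf L1 L2 P) = pmf_of_set {1..L1}"
    unfolding sample_pmf_def by (simp add: map_bind_pmf bind_pmf_const bind_return_pmf')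
  have "measure_pmf.prob (sample_pmf L1 L2 P) {w. sZ1 w = l} = measure_pmf.prob (sample_pmf L1 L2 P) (sZ1 -` {l})"
    by (rule arg_cong[where f="measure_pmf.prob (sample_pmf L1 L2 P)"]) auto
  also have "\<dots> = measure_pmf.prob (map_pmf sZ1 (sample_pmf L1 L2 P)) {l}" by (rule measure_map_pmf[symmetric])
  also have "\<dots> = measure_pmf.prob (pmf_of_set {1..L1}) {l}" by (simp only: mp)
  also have "\<dots> = 1 / L1" using assms by (simp add: measure_pmf_of_set)
  finally show ?thesis .
qed

lemma Z2_marg: assumes "1 \<le> L2" "l \<in> {1..L2}"
  shows "measure_pmf.prob (sample_pmf L1 L2 P) {w. sZ2 w = l} = 1 / L2"
proof -
  have mp: "map_pmf sZ2 (sample_pmf L1 L2 P) = pmf_of_set {1..L2}"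
    unfolding sample_pmf_def by (simp add: map_bind_pmf bind_pmf_const bind_return_pmf')
  have "measure_pmf.prob (sample_pmf L1 L2 P) {w. sZ2 w = l} = measure_pmf.prob (sample_pmf L1 L2 P) (sZ2 -` {l})"
    by (rule arg_cong[where f="measure_pmf.prob (sample_pmf L1 L2 P)"]) auto
  also have "\<dots> = measure_pmf.prob (map_pmf sZ2 (sample_pmf L1 L2 P)) {l}" by (rule measure_map_pmf[symmetric])
  also have "\<dots> = measure_pmf.prob (pmf_of_set {1..L2}) {l}" by (simp only: mp)
  also have "\<dots> = 1 / L2" using assms by (simp add: measure_pmf_of_set)
  finally show ?thesis .
qed


lemma fact_gen:
  fixes M :: "'w pmf" and sa :: "'w \<Rightarrow> 'a" and sb :: "'w \<Rightarrow> 'b"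
  assumes prod: "\<And>\<Phi> \<Psi>. measure_pmf.prob M {w. \<Phi> (sa w) \<and> \<Psi> (sb w)} = q1 \<Phi> * q2 \<Psi>"
    and Vd: "\<And>w. (V w = v) \<longleftrightarrow> \<Phi>0 (sa w) \<and> \<Psi>0 (sb w)"
    and Fd: "\<And>w. F w = f1 (sa w)" and Rd: "\<And>w. R w = r2 (sb w)"
  shows "measure_pmf.prob M {w. F w \<in> A \<and> V w = v \<and> R w \<in> B} * measure_pmf.prob M {w. V w = v}
    = measure_pmf.prob M {w. F w \<in> A \<and> V w = v} * measure_pmf.prob M {w. V w = v \<and> R w \<in> B}"
proof -
  have e1: "{w. F w \<in> A \<and> V w = v \<and> R w \<in> B} = {w. (f1 (sa w) \<in> A \<and> \<Phi>0 (sa w)) \<and> (\<Psi>0 (sb w) \<and> r2 (sb w) \<in> B)}"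
    by (auto simp: Vd Fd Rd)
  have e2: "{w. V w = v} = {w. \<Phi>0 (sa w) \<and> \<Psi>0 (sb w)}" by (auto simp: Vd)
  have e3: "{w. F w \<in> A \<and> V w = v} = {w. (f1 (sa w) \<in> A \<and> \<Phi>0 (sa w)) \<and> \<Psi>0 (sb w)}"
    by (auto simp: Vd Fd)
  have e4: "{w. V w = v \<and> R w \<in> B} = {w. \<Phi>0 (sa w) \<and> (\<Psi>0 (sb w) \<and> r2 (sb w) \<in> B)}"
    by (auto simp: Vd Rd)
  show ?thesis unfolding e1 e2 e3 e4
    using prod[of "\<lambda>a. f1 a \<in> A \<and> \<Phi>0 a" "\<lambda>b. \<Psi>0 b \<and> r2 b \<in> B"] prod[of \<Phi>0 \<Psi>0]
      prod[of "\<lambda>a. f1 a \<in> A \<and> \<Phi>0 a" \<Psi>0] prod[of \<Phi>0 "\<lambda>b. \<Psi>0 b \<and> r2 b \<in> B"]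
    by (simp add: mult_ac)
qed

definition Yf :: "bool list \<Rightarrow> bool list \<Rightarrow> nat list" where
  "Yf x y = map2 (\<lambda>a b. of_bool a + of_bool b) x y"

lemma Yn_Yf: "Yn n P w = Yf (Xn1 n P w) (Xn2 n P w)"
  by (simp add: Yn_def Yf_def)

lemma Vd1: "((Xn1 n P w, Aall n P w) = (x1, a1, a2)) \<longleftrightarrow>
   (map (enc1 P (sF1 w) (sU1 w)) [0..<n] = x1 \<and> length a1 = rounds P \<and> cs (\<lambda>j. srv1 P j (sF1 w) (sU1 w)) a1) \<and>
   (cc (\<lambda>j. cli1 P j (sZ1 w) (sU0 w) (Yf x1 (map (enc2 P (sF2 w) (sU2 w)) [0..<n]))) a1 \<and>
    run_rounds (rounds P) (\<lambda>j. srv2 P j (sF2 w) (sU2 w)) (\<lambda>j. cli2 P j (sZ2 w) (sU0 w) (Yf x1 (map (enc2 P (sF2 w) (sU2 w)) [0..<n]))) = a2)"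
proof -
  have e0: "((Xn1 n P w, Aall n P w) = (x1, a1, a2)) \<longleftrightarrow> Xn1 n P w = x1 \<and> A1 n P w = a1 \<and> A2 n P w = a2"
    by (simp add: Aall_def)
  have A1e: "A1 n P w = a1 \<longleftrightarrow> length a1 = rounds P \<and> cs (\<lambda>j. srv1 P j (sF1 w) (sU1 w)) a1 \<and> cc (\<lambda>j. cli1 P j (sZ1 w) (sU0 w) (Yn n P w)) a1"
    unfolding A1_def by (rule rr_iff)
  have A2e: "A2 n P w = run_rounds (rounds P) (\<lambda>j. srv2 P j (sF2 w) (sU2 w)) (\<lambda>j. cli2 P j (sZ2 w) (sU0 w) (Yn n P w))"
    unfolding A2_def by (rule refl)
  have Y: "Xn1 n P w = x1 \<Longrightarrow> Yn n P w = Yf x1 (map (enc2 P (sF2 w) (sU2 w)) [0..<n])"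
    by (simp add: Yn_Yf Xn2_def)
  have X: "Xn1 n P w = map (enc1 P (sF1 w) (sU1 w)) [0..<n]" by (simp add: Xn1_def)
  show ?thesis unfolding e0 A1e A2e
    by (cases "Xn1 n P w = x1") (simp_all add: Y, simp_all add: X)
qed

lemma Vd2: "((Xn2 n P w, Aall n P w) = (x2, a1, a2)) \<longleftrightarrow>
   (map (enc2 P (sF2 w) (sU2 w)) [0..<n] = x2 \<and> length a2 = rounds P \<and> cs (\<lambda>j. srv2 P j (sF2 w) (sU2 w)) a2) \<and>
   (run_rounds (rounds P) (\<lambda>j. srv1 P j (sF1 w) (sU1 w)) (\<lambda>j. cli1 P j (sZ1 w) (sU0 w) (Yf (map (enc1 P (sF1 w) (sU1 w)) [0..<n]) x2)) = a1 \<and>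
    cc (\<lambda>j. cli2 P j (sZ2 w) (sU0 w) (Yf (map (enc1 P (sF1 w) (sU1 w)) [0..<n]) x2)) a2)"
proof -
  have e0: "((Xn2 n P w, Aall n P w) = (x2, a1, a2)) \<longleftrightarrow> Xn2 n P w = x2 \<and> A1 n P w = a1 \<and> A2 n P w = a2"
    by (simp add: Aall_def)
  have A2e: "A2 n P w = a2 \<longleftrightarrow> length a2 = rounds P \<and> cs (\<lambda>j. srv2 P j (sF2 w) (sU2 w)) a2 \<and> cc (\<lambda>j. cli2 P j (sZ2 w) (sU0 w) (Yn n P w)) a2"
    unfolding A2_def by (rule rr_iff)
  have A1e: "A1 n P w = run_rounds (rounds P) (\<lambda>j. srv1 P j (sF1 w) (sU1 w)) (\<lambda>j. cli1 P j (sZ1 w) (sU0 w) (Yn n P w))"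
    unfolding A1_def by (rule refl)
  have Y: "Xn2 n P w = x2 \<Longrightarrow> Yn n P w = Yf (map (enc1 P (sF1 w) (sU1 w)) [0..<n]) x2"
    by (simp add: Yn_Yf Xn1_def)
  have X: "Xn2 n P w = map (enc2 P (sF2 w) (sU2 w)) [0..<n]" by (simp add: Xn2_def)
  show ?thesis unfolding e0 A1e A2e
    by (cases "Xn2 n P w = x2") (simp_all add: Y X conj_ac)
qed

lemma fact1:
  assumes "valid_protocol P" "1 \<le> L1" "1 \<le> L2"
  shows "measure_pmf.prob (sample_pmf L1 L2 P) {w. sF1 w \<in> A \<and> (Xn1 n P w, Aall n P w) = v \<and> (Xn2 n P w, sU0 w, sZ1 w) \<in> B}
        * measure_pmf.prob (sample_pmf L1 L2 P) {w. (Xn1 n P w, Aall n P w) = v}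
      = measure_pmf.prob (sample_pmf L1 L2 P) {w. sF1 w \<in> A \<and> (Xn1 n P w, Aall n P w) = v}
        * measure_pmf.prob (sample_pmf L1 L2 P) {w. (Xn1 n P w, Aall n P w) = v \<and> (Xn2 n P w, sU0 w, sZ1 w) \<in> B}"
proof -
  obtain x1 a1 a2 where v: "v = (x1, a1, a2)" by (cases v) auto
  show ?thesis
  proof (rule fact_gen[where sa = "\<lambda>w. (sF1 w, sU1 w)" and sb = "\<lambda>w. (sF2 w, sU0 w, sU2 w, sZ1 w, sZ2 w)"])
    show "measure_pmf.prob (sample_pmf L1 L2 P) {w. \<Phi> (sF1 w, sU1 w) \<and> \<Psi> (sF2 w, sU0 w, sU2 w, sZ1 w, sZ2 w)}
      = measure_pmf.prob (D11 L1 P) {a. \<Phi> a} * measure_pmf.prob (D12 L1 L2 P) {b. \<Psi> b}" for \<Phi> \<Psi>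
      by (rule prod1[OF assms])
    show "((Xn1 n P w, Aall n P w) = v) \<longleftrightarrow>
      (\<lambda>(f1, u1). map (enc1 P f1 u1) [0..<n] = x1 \<and> length a1 = rounds P \<and> cs (\<lambda>j. srv1 P j f1 u1) a1) (sF1 w, sU1 w) \<and>
      (\<lambda>(f2, u0, u2, z1, z2). cc (\<lambda>j. cli1 P j z1 u0 (Yf x1 (map (enc2 P f2 u2) [0..<n]))) a1 \<and>
          run_rounds (rounds P) (\<lambda>j. srv2 P j f2 u2) (\<lambda>j. cli2 P j z2 u0 (Yf x1 (map (enc2 P f2 u2) [0..<n]))) = a2)
        (sF2 w, sU0 w, sU2 w, sZ1 w, sZ2 w)" for w
      unfolding v Vd1 by simp
    show "sF1 w = fst (sF1 w, sU1 w)" for w by simp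
    show "(Xn2 n P w, sU0 w, sZ1 w) = (\<lambda>(f2, u0, u2, z1, z2). (map (enc2 P f2 u2) [0..<n], u0, z1)) (sF2 w, sU0 w, sU2 w, sZ1 w, sZ2 w)" for w
      by (simp add: Xn2_def)
  qed
qed

lemma fact2:
  assumes "valid_protocol P" "1 \<le> L1" "1 \<le> L2"
  shows "measure_pmf.prob (sample_pmf L1 L2 P) {w. sF2 w \<in> A \<and> (Xn2 n P w, Aall n P w) = v \<and> (Xn1 n P w, sU0 w, sZ2 w) \<in> B}
        * measure_pmf.prob (sample_pmf L1 L2 P) {w. (Xn2 n P w, Aall n P w) = v}
      = measure_pmf.prob (sample_pmf L1 L2 P) {w. sF2 w \<in> A \<and> (Xn2 n P w, Aall n P w) = v}
        * measure_pmf.prob (sample_pmf L1 L2 P) {w. (Xn2 n P w, Aall n P w) = v \<and> (Xn1 n P w, sU0 w, sZ2 w) \<in> B}"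
proof -
  obtain x2 a1 a2 where v: "v = (x2, a1, a2)" by (cases v) auto
  show ?thesis
  proof (rule fact_gen[where sa = "\<lambda>w. (sF2 w, sU2 w)" and sb = "\<lambda>w. (sF1 w, sU0 w, sU1 w, sZ1 w, sZ2 w)"])
    show "measure_pmf.prob (sample_pmf L1 L2 P) {w. \<Phi> (sF2 w, sU2 w) \<and> \<Psi> (sF1 w, sU0 w, sU1 w, sZ1 w, sZ2 w)}
      = measure_pmf.prob (D21 L2 P) {a. \<Phi> a} * measure_pmf.prob (D22 L1 L2 P) {b. \<Psi> b}" for \<Phi> \<Psi>
      by (rule prod2[OF assms])
    show "((Xn2 n P w, Aall n P w) = v) \<longleftrightarrow>
      (\<lambda>(f2, u2). map (enc2 P f2 u2) [0..<n] = x2 \<and> length a2 = rounds P \<and> cs (\<lambda>j. srv2 P j f2 u2) a2) (sF2 w, sU2 w) \<and>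
      (\<lambda>(f1, u0, u1, z1, z2). run_rounds (rounds P) (\<lambda>j. srv1 P j f1 u1) (\<lambda>j. cli1 P j z1 u0 (Yf (map (enc1 P f1 u1) [0..<n]) x2)) = a1 \<and>
          cc (\<lambda>j. cli2 P j z2 u0 (Yf (map (enc1 P f1 u1) [0..<n]) x2)) a2)
        (sF1 w, sU0 w, sU1 w, sZ1 w, sZ2 w)" for w
      unfolding v Vd2 by simp
    show "sF2 w = fst (sF2 w, sU2 w)" for w by simp
    show "(Xn1 n P w, sU0 w, sZ2 w) = (\<lambda>(f1, u0, u1, z1, z2). (map (enc1 P f1 u1) [0..<n], u0, z2)) (sF1 w, sU0 w, sU1 w, sZ1 w, sZ2 w)" for w
      by (simp add: Xn1_def)
  qed
qed


lemma lenK: "real (nat \<lfloor>real n * R\<rfloor>) \<le> real n * \<bar>R\<bar>"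
proof (cases "\<lfloor>real n * R\<rfloor> \<le> 0")
  case True then show ?thesis by simp
next
  case False
  then have "real (nat \<lfloor>real n * R\<rfloor>) = real_of_int \<lfloor>real n * R\<rfloor>" by simp
  also have "\<dots> \<le> real n * R" by simp
  also have "\<dots> \<le> real n * \<bar>R\<bar>" by (simp add: mult_left_mono)
  finally show ?thesis .
qed

theorem lemma6:
  fixes L1 L2 :: nat and R1 R2 :: real and P :: "nat \<Rightarrow> spir_protocol"
  assumes "L1 \<ge> 1" and "L2 \<ge> 1"
    and "achieves L1 L2 R1 R2 P"
  shows "(\<lambda>n. cond_ent (sample_pmf L1 L2 (P n))
            (\<lambda>w. other_files L1 (sF1 w) (sZ1 w))
            (\<lambda>w. (Xn1 n (P n) w, Aall n (P n) w, sZ1 w, sZ2 w)) / real n) \<longlonglongrightarrow> 0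
       \<and> (\<lambda>n. cond_ent (sample_pmf L1 L2 (P n))
            (\<lambda>w. other_files L2 (sF2 w) (sZ2 w))
            (\<lambda>w. (Xn2 n (P n) w, Aall n (P n) w, sZ1 w, sZ2 w)) / real n) \<longlonglongrightarrow> 0"
proof -
  note ach = assms(3)[unfolded achieves_def]
  have valid: "\<And>n. valid_protocol (P n)" and l1: "\<And>n. len1 (P n) = nat \<lfloor>real n * R1\<rfloor>"
    and l2: "\<And>n. len2 (P n) = nat \<lfloor>real n * R2\<rfloor>" using ach by auto
  define perr where "perr n = measure_pmf.prob (sample_pmf L1 L2 (P n))
        {w. (dec1 (P n) (Yn n (P n) w) (sU0 w) (A1 n (P n) w) (sZ1 w),
             dec2 (P n) (Yn n (P n) w) (sU0 w) (A2 n (P n) w) (sZ2 w))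
            \<noteq> (sF1 w (sZ1 w), sF2 w (sZ2 w))}" for n
  have p0: "perr \<longlonglongrightarrow> 0" using ach unfolding perr_def by blast
  have I1: "(\<lambda>n. mut_inf (sample_pmf L1 L2 (P n))
        (\<lambda>w. (all_files L1 (sF1 w), Xn1 n (P n) w, sU1 w, Aall n (P n) w))
        (\<lambda>w. (sZ1 w, sZ2 w))) \<longlonglongrightarrow> 0" using ach by blast
  have I2: "(\<lambda>n. mut_inf (sample_pmf L1 L2 (P n))
        (\<lambda>w. (all_files L2 (sF2 w), Xn2 n (P n) w, sU2 w, Aall n (P n) w))
        (\<lambda>w. (sZ1 w, sZ2 w))) \<longlonglongrightarrow> 0" using ach by blast
  have fin: "\<And>n. finite (set_pmf (sample_pmf L1 L2 (P n)))" by (rule fin_sample[OF valid assms(1,2)])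
  have part1: "(\<lambda>n. cond_ent (sample_pmf L1 L2 (P n))
            (\<lambda>w. other_files L1 (sF1 w) (sZ1 w))
            (\<lambda>w. (Xn1 n (P n) w, Aall n (P n) w, sZ1 w, sZ2 w)) / real n) \<longlonglongrightarrow> 0"
    apply (rule server_bound[where M = "\<lambda>n. sample_pmf L1 L2 (P n)" and F = sF1 and L = L1 and len = "\<lambda>n. len1 (P n)"
          and Xs = "\<lambda>n. Xn1 n (P n)" and Aa = "\<lambda>n. Aall n (P n)" and U = sU1 and Zown = sZ1 and Za = sZ1 and Zb = sZ2
          and \<gamma> = fst and R = "\<lambda>n w. (Xn2 n (P n) w, sU0 w, sZ1 w)" and \<zeta> = "\<lambda>(x, u, z). z"
          and d = "\<lambda>n (x1, a1, a2) (x2, u0, z1). dec1 (P n) (Yf x1 x2) u0 a1 z1" and p = perr and K = "\<bar>R1\<bar>"])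
    subgoal by (rule fin)
    subgoal by (rule assms(1))
    subgoal for n w l by (rule fs_len[OF supp_sample(1)[OF assms(1,2)]])
    subgoal for n unfolding l1 by (rule lenK)
    subgoal by simp
    subgoal by simp
    subgoal for n l by (rule Z1_marg[OF assms(1)])
    subgoal for n v A B by (rule fact1[OF valid assms(1,2)])
    subgoal for n unfolding perr_def
      by (rule measure_pmf.finite_measure_mono) (auto simp: Yn_Yf Aall_def)
    subgoal by (rule p0)
    subgoal by (rule I1)
    done
  have part2: "(\<lambda>n. cond_ent (sample_pmf L1 L2 (P n))
            (\<lambda>w. other_files L2 (sF2 w) (sZ2 w))
            (\<lambda>w. (Xn2 n (P n) w, Aall n (P n) w, sZ1 w, sZ2 w)) / real n) \<longlonglongrightarrow> 0"
    apply (rule server_bound[where M = "\<lambda>n. sample_pmf L1 L2 (P n)" and F = sF2 and L = L2 and len = "\<lambda>n. len2 (P n)"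
          and Xs = "\<lambda>n. Xn2 n (P n)" and Aa = "\<lambda>n. Aall n (P n)" and U = sU2 and Zown = sZ2 and Za = sZ1 and Zb = sZ2
          and \<gamma> = snd and R = "\<lambda>n w. (Xn1 n (P n) w, sU0 w, sZ2 w)" and \<zeta> = "\<lambda>(x, u, z). z"
          and d = "\<lambda>n (x2, a1, a2) (x1, u0, z2). dec2 (P n) (Yf x1 x2) u0 a2 z2" and p = perr and K = "\<bar>R2\<bar>"])
    subgoal by (rule fin)
    subgoal by (rule assms(2))
    subgoal for n w l by (rule fs_len[OF supp_sample(2)[OF assms(1,2)]])
    subgoal for n unfolding l2 by (rule lenK)
    subgoal by simp
    subgoal by simp
    subgoal for n l by (rule Z2_marg[OF assms(2)])
    subgoal for n v A B by (rule fact2[OF valid assms(1,2)])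
    subgoal for n unfolding perr_def
      by (rule measure_pmf.finite_measure_mono) (auto simp: Yn_Yf Aall_def)
    subgoal by (rule p0)
    subgoal by (rule I2)
    done
  show ?thesis using part1 part2 by simp
qed

end
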